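(* Let $r\ge0$ and let $f:A\to B$ be a morphism of finitely generated $E_r$-cofibrant dga's over a field $\mathbf{k}$ of characteristic $0$. The following are equivalent: (1) $f$ admits an $r$-splitting; (2) the morphism $E_r:\mathrm{Aut}_W(f)\to\mathrm{Aut}(E_r(f))$ is surjective; (3) there exist $\alpha\in\mathbf{k}^*$, not a root of unity, and $\Phi=(\Phi^A,\Phi^B)\in\mathrm{Aut}_W(f)$ such that $E_r(\Phi^A)$ and $E_r(\Phi^B)$ are the $r$-bigrading automorphisms of $E_r(A)$ and $E_r(B)$ associated with $\alpha$.
   Context: Filtered dga's: a filtered dga over $\mathbf{k}$ is a non-negatively graded commutative dga $A$ (differential of degree $+1$) with an increasing multiplicative regular exhaustive filtration $W$ by subcomplexes, with filtered unit. $E_r(A)$ is the spectral sequence of $(A,W)$ with $E_0^{-p,n+p}(A)=Gr^W_pA^n$, a bigraded dga. $\mathrm{Aut}_W(f)$ is the group of pairs $(F^A,F^B)$ of filtered dga automorphisms of $A$ and $B$ with $fF^A=F^Bf$; $\mathrm{Aut}(E_r(f))$ is the group of pairs of bigraded dga automorphisms $(G^A,G^B)$ of $E_r(A),E_r(B)$ with $E_r(f)G^A=G^BE_r(f)$; $E_r$ denotes the induced group morphism. For $\alpha\in\mathbf{k}^*$, the $r$-bigrading automorphism $\varphi_\alpha$ of $E_r(A)$ is $\varphi_\alpha(a)=\alpha^{nr+p}a$ for $a\in E_r^{-p,n+p}(A)$. $E_r$-cofibrant dga's: an $E_r$-cofibrant extension of degree $n$ and weight $p$ of a filtered dga $A$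 is $A\otimes_\xi\Lambda V$ with $V$ concentrated in degree $n$ and pure weight $p$ and $\xi:V\to W_{p-r}A^{n+1}$ linear with $d\xi=0$; $dv=\xi(v)$, filtration extended multiplicatively. An $E_r$-cofibrant dga is the colimit of a sequence of such extensions from $\mathbf{k}$; finitely generated means finitely many extensions with finite-dimensional $V$. $r$-splitting: an $r$-splitting of a filtered dga $A$ is a direct sum decomposition $A=\bigoplus_{p,q}A^{p,q}$ with $d(A^{p,q})\subset A^{p+r,q-r+1}$, $A^{p,q}\cdot A^{p',q'}\subset A^{p+p',q+q'}$ and $W_mA^n=\bigoplus_{p\le m}A^{-p,n+p}$; a morphism $f:A\to B$ admits an $r$-splitting if $A,B$ admit $r$-splittings and $f(A^{p,q})\subset B^{p,q}$. *)

theory Defs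
  imports Complex_Main
begin

text \<open>A filtered dga is represented on a type 'v (the whole type is the underlying
  vector space A = (+)_n A^n). Degrees n and weights p are integers;
  deg A n is A^n (zero for n < 0) and W A p n is W_p A^n.\<close>

record ('k, 'v) fdga =
  smult :: "'k \<Rightarrow> 'v \<Rightarrow> 'v"
  mul   :: "'v \<Rightarrow> 'v \<Rightarrow> 'v"
  one   :: "'v"
  dif   :: "'v \<Rightarrow> 'v"
  deg   :: "int \<Rightarrow> 'v set"
  W     :: "int \<Rightarrow> int \<Rightarrow> 'v set"

definition is_fdga :: "('k::field, 'v::ab_group_add) fdga \<Rightarrow> bool" where
  "is_fdga A \<longleftrightarrow>
     vector_space (smult A)
   \<and> (\<forall>n. module.subspace (smult A) (deg A n))
   \<and> (\<forall>n<0. deg A n = {0})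
   \<and> (\<forall>v. \<exists>g P. finite P \<and> (\<forall>n\<in>P. g n \<in> deg A n) \<and> v = sum g P)
   \<and> (\<forall>g P. finite P \<and> (\<forall>n\<in>P. g n \<in> deg A n) \<and> sum g P = 0 \<longrightarrow> (\<forall>n\<in>P. g n = 0))
   \<and> (\<forall>a b c. mul A (a + b) c = mul A a c + mul A b c \<and> mul A a (b + c) = mul A a b + mul A a c)
   \<and> (\<forall>k a b. mul A (smult A k a) b = smult A k (mul A a b) \<and> mul A a (smult A k b) = smult A k (mul A a b))
   \<and> (\<forall>a b c. mul A (mul A a b) c = mul A a (mul A b c))
   \<and> (\<forall>a. mul A (one A) a = a \<and> mul A a (one A) = a)
   \<and> one A \<in> deg A 0
   \<and> (\<forall>n m a b. a \<in> deg A n \<longrightarrow> b \<in> deg A m \<longrightarrow>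
        mul A a b \<in> deg A (n + m) \<and>
        mul A a b = (if even (n * m) then mul A b a else - mul A b a))
   \<and> (\<forall>a b. dif A (a + b) = dif A a + dif A b)
   \<and> (\<forall>k a. dif A (smult A k a) = smult A k (dif A a))
   \<and> (\<forall>n. dif A ` deg A n \<subseteq> deg A (n + 1))
   \<and> (\<forall>a. dif A (dif A a) = 0)
   \<and> (\<forall>n a b. a \<in> deg A n \<longrightarrow>
        dif A (mul A a b) = mul A (dif A a) b + (if even n then mul A a (dif A b) else - mul A a (dif A b)))
   \<and> (\<forall>p n. module.subspace (smult A) (W A p n))
   \<and> (\<forall>p n. W A p n \<subseteq> W A (p + 1) n)
   \<and> (\<forall>p n. W A p n \<subseteq> deg A n)
   \<and> (\<forall>n. (\<Union>p. W A p n) = deg A n)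
   \<and> (\<forall>n. \<exists>q. W A q n = {0})
   \<and> (\<forall>p n. dif A ` W A p n \<subseteq> W A p (n + 1))
   \<and> (\<forall>p q n m a b. a \<in> W A p n \<longrightarrow> b \<in> W A q m \<longrightarrow> mul A a b \<in> W A (p + q) (n + m))
   \<and> one A \<in> W A 0 0"

definition fdga_hom :: "('k::field, 'v::ab_group_add) fdga \<Rightarrow> ('k, 'w::ab_group_add) fdga \<Rightarrow> ('v \<Rightarrow> 'w) \<Rightarrow> bool" where
  "fdga_hom A B f \<longleftrightarrow>
     (\<forall>u v. f (u + v) = f u + f v)
   \<and> (\<forall>c v. f (smult A c v) = smult B c (f v))
   \<and> (\<forall>n. f ` deg A n \<subseteq> deg B n)
   \<and> f (one A) = one B
   \<and> (\<forall>u v. f (mul A u v) = mul B (f u) (f v))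
   \<and> (\<forall>v. f (dif A v) = dif B (f v))
   \<and> (\<forall>p n. f ` W A p n \<subseteq> W B p n)"

definition fil_aut :: "('k::field, 'v::ab_group_add) fdga \<Rightarrow> ('v \<Rightarrow> 'v) \<Rightarrow> bool" where
  "fil_aut A F \<longleftrightarrow> fdga_hom A A F \<and> bij F \<and> (\<forall>p n. F ` W A p n = W A p n)"

definition AutW :: "('k::field, 'v::ab_group_add) fdga \<Rightarrow> ('k, 'w::ab_group_add) fdga \<Rightarrow> ('v \<Rightarrow> 'w)
    \<Rightarrow> ('v \<Rightarrow> 'v) \<Rightarrow> ('w \<Rightarrow> 'w) \<Rightarrow> bool" where
  "AutW A B f FA FB \<longleftrightarrow> fil_aut A FA \<and> fil_aut B FB \<and> (\<forall>a. f (FA a) = FB (f a))"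

text \<open>Indexing: (p, n) = (weight, degree), so the term E_r^{p,n} below is
  E_r^{-p,n+p}(A) in the paper's notation. Page index s is an integer (s = r - 1 may be -1).\<close>

definition Zs :: "('k, 'v::ab_group_add) fdga \<Rightarrow> int \<Rightarrow> int \<Rightarrow> int \<Rightarrow> 'v set" where
  "Zs A s p n = {a \<in> W A p n. dif A a \<in> W A (p - s) (n + 1)}"

definition Bs :: "('k, 'v::ab_group_add) fdga \<Rightarrow> int \<Rightarrow> int \<Rightarrow> int \<Rightarrow> 'v set" where
  "Bs A s p n = {a \<in> W A p n. \<exists>b \<in> W A (p + s) (n - 1). a = dif A b}"

definition Ddenom :: "('k, 'v::ab_group_add) fdga \<Rightarrow> int \<Rightarrow> int \<Rightarrow> int \<Rightarrow> 'v set" where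
  "Ddenom A r p n = {a + b | a b. a \<in> Zs A (r - 1) (p - 1) n \<and> b \<in> Bs A (r - 1) p n}"

definition cls :: "('k, 'v::ab_group_add) fdga \<Rightarrow> int \<Rightarrow> int \<Rightarrow> int \<Rightarrow> 'v \<Rightarrow> 'v set" where
  "cls A r p n z = (\<lambda>y. z + y) ` Ddenom A r p n"

definition Ep :: "('k, 'v::ab_group_add) fdga \<Rightarrow> int \<Rightarrow> int \<Rightarrow> int \<Rightarrow> 'v set set" where
  "Ep A r p n = cls A r p n ` Zs A r p n"

definition rep :: "'v set \<Rightarrow> 'v" where
  "rep X = (SOME x. x \<in> X)"

definition E_add :: "'v::ab_group_add set \<Rightarrow> 'v set \<Rightarrow> 'v set" where
  "E_add X Y = {x + y | x y. x \<in> X \<and> y \<in> Y}"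

definition E_smult :: "('k, 'v::ab_group_add) fdga \<Rightarrow> int \<Rightarrow> int \<Rightarrow> int \<Rightarrow> 'k \<Rightarrow> 'v set \<Rightarrow> 'v set" where
  "E_smult A r p n c X = cls A r p n (smult A c (rep X))"

text \<open>Product of a class of bidegree (p,n) with one of bidegree (p',n'), landing in (p+p', n+n').\<close>
definition E_mul :: "('k, 'v::ab_group_add) fdga \<Rightarrow> int \<Rightarrow> int \<Rightarrow> int \<Rightarrow> 'v set \<Rightarrow> 'v set \<Rightarrow> 'v set" where
  "E_mul A r p n X Y = cls A r p n (mul A (rep X) (rep Y))"

definition E_d :: "('k, 'v::ab_group_add) fdga \<Rightarrow> int \<Rightarrow> int \<Rightarrow> int \<Rightarrow> 'v set \<Rightarrow> 'v set" where
  "E_d A r p n X = cls A r (p - r) (n + 1) (dif A (rep X))"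

definition E_one :: "('k, 'v::ab_group_add) fdga \<Rightarrow> int \<Rightarrow> 'v set" where
  "E_one A r = cls A r 0 0 (one A)"

definition Er_map :: "('k, 'v::ab_group_add) fdga \<Rightarrow> ('k, 'w::ab_group_add) fdga \<Rightarrow> int \<Rightarrow> ('v \<Rightarrow> 'w)
    \<Rightarrow> int \<Rightarrow> int \<Rightarrow> 'v set \<Rightarrow> 'w set" where
  "Er_map A B r F p n X = cls B r p n (F (rep X))"

definition Er_aut :: "('k::field, 'v::ab_group_add) fdga \<Rightarrow> int \<Rightarrow> (int \<Rightarrow> int \<Rightarrow> 'v set \<Rightarrow> 'v set) \<Rightarrow> bool" where
  "Er_aut A r G \<longleftrightarrow>
     (\<forall>p n. bij_betw (G p n) (Ep A r p n) (Ep A r p n))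
   \<and> (\<forall>p n. \<forall>X\<in>Ep A r p n. \<forall>Y\<in>Ep A r p n. G p n (E_add X Y) = E_add (G p n X) (G p n Y))
   \<and> (\<forall>p n c. \<forall>X\<in>Ep A r p n. G p n (E_smult A r p n c X) = E_smult A r p n c (G p n X))
   \<and> (\<forall>p n p' n'. \<forall>X\<in>Ep A r p n. \<forall>Y\<in>Ep A r p' n'.
        G (p + p') (n + n') (E_mul A r (p + p') (n + n') X Y)
          = E_mul A r (p + p') (n + n') (G p n X) (G p' n' Y))
   \<and> (\<forall>p n. \<forall>X\<in>Ep A r p n. G (p - r) (n + 1) (E_d A r p n X) = E_d A r p n (G p n X))
   \<and> G 0 0 (E_one A r) = E_one A r"

definition AutE :: "('k::field, 'v::ab_group_add) fdga \<Rightarrow> ('k, 'w::ab_group_add) fdga \<Rightarrow> int \<Rightarrow> ('v \<Rightarrow> 'w)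
    \<Rightarrow> (int \<Rightarrow> int \<Rightarrow> 'v set \<Rightarrow> 'v set) \<Rightarrow> (int \<Rightarrow> int \<Rightarrow> 'w set \<Rightarrow> 'w set) \<Rightarrow> bool" where
  "AutE A B r f GA GB \<longleftrightarrow> Er_aut A r GA \<and> Er_aut B r GB
     \<and> (\<forall>p n. \<forall>X\<in>Ep A r p n. Er_map A B r f p n (GA p n X) = GB p n (Er_map A B r f p n X))"

definition Er_induces :: "('k::field, 'v::ab_group_add) fdga \<Rightarrow> int \<Rightarrow> ('v \<Rightarrow> 'v)
    \<Rightarrow> (int \<Rightarrow> int \<Rightarrow> 'v set \<Rightarrow> 'v set) \<Rightarrow> bool" where
  "Er_induces A r F G \<longleftrightarrow> (\<forall>p n. \<forall>X\<in>Ep A r p n. Er_map A A r F p n X = G p n X)"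

text \<open>The r-bigrading automorphism phi_alpha: multiplication by alpha^(n r + p) on the
  term of weight p and degree n (i.e. on E_r^{-p,n+p}).\<close>
definition bigrading_aut :: "('k::field, 'v::ab_group_add) fdga \<Rightarrow> int \<Rightarrow> 'k \<Rightarrow> int \<Rightarrow> int \<Rightarrow> 'v set \<Rightarrow> 'v set" where
  "bigrading_aut A r \<alpha> p n X = E_smult A r p n (\<alpha> powi (n * r + p)) X"

text \<open>S p n stands for A^{-p,n+p} (weight p, degree n).\<close>
definition r_splitting :: "('k::field, 'v::ab_group_add) fdga \<Rightarrow> int \<Rightarrow> (int \<Rightarrow> int \<Rightarrow> 'v set) \<Rightarrow> bool" where
  "r_splitting A r S \<longleftrightarrow>
     (\<forall>p n. module.subspace (smult A) (S p n))
   \<and> (\<forall>v. \<exists>g P. finite P \<and> (\<forall>i\<in>P. g i \<in> S (fst i) (snd i)) \<and> v = sum g P)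
   \<and> (\<forall>g P. finite P \<and> (\<forall>i\<in>P. g i \<in> S (fst i) (snd i)) \<and> sum g P = 0 \<longrightarrow> (\<forall>i\<in>P. g i = 0))
   \<and> (\<forall>p n. dif A ` S p n \<subseteq> S (p - r) (n + 1))
   \<and> (\<forall>p n p' n' a b. a \<in> S p n \<longrightarrow> b \<in> S p' n' \<longrightarrow> mul A a b \<in> S (p + p') (n + n'))
   \<and> (\<forall>m n. W A m n = {sum g P | g P. finite P \<and> P \<subseteq> {..m} \<and> (\<forall>p\<in>P. g p \<in> S p n)})"

definition admits_r_splitting :: "('k::field, 'v::ab_group_add) fdga \<Rightarrow> ('k, 'w::ab_group_add) fdga
    \<Rightarrow> int \<Rightarrow> ('v \<Rightarrow> 'w) \<Rightarrow> bool" where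
  "admits_r_splitting A B r f \<longleftrightarrow>
     (\<exists>SA SB. r_splitting A r SA \<and> r_splitting B r SB \<and> (\<forall>p n. f ` SA p n \<subseteq> SB p n))"

text \<open>Generators xs (in the order of the successive extensions), with degrees ds and weights ws.
  Monomials are indexed by exponent lists e (exponent at most 1 on odd generators).\<close>

definition mpow :: "('k, 'v) fdga \<Rightarrow> 'v \<Rightarrow> nat \<Rightarrow> 'v" where
  "mpow A x k = ((mul A x) ^^ k) (one A)"

definition mono :: "('k, 'v) fdga \<Rightarrow> 'v list \<Rightarrow> nat list \<Rightarrow> 'v" where
  "mono A xs e = foldr (\<lambda>i acc. mul A (mpow A (xs ! i) (e ! i)) acc) [0..<length xs] (one A)"

definition Adm :: "int list \<Rightarrow> nat list set" where
  "Adm ds = {e. length e = length ds \<and> (\<forall>i<length ds. odd (ds ! i) \<longrightarrow> e ! i \<le> 1)}"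

definition mdeg :: "int list \<Rightarrow> nat list \<Rightarrow> int" where
  "mdeg ds e = (\<Sum>i<length ds. int (e ! i) * ds ! i)"

definition mwt :: "int list \<Rightarrow> nat list \<Rightarrow> int" where
  "mwt ws e = (\<Sum>i<length ws. int (e ! i) * ws ! i)"

definition Er_cofibrant_fg :: "('k::field, 'v::ab_group_add) fdga \<Rightarrow> int \<Rightarrow> bool" where
  "Er_cofibrant_fg A r \<longleftrightarrow> is_fdga A \<and>
    (\<exists>xs ds ws. length ds = length xs \<and> length ws = length xs
      \<and> (\<forall>i<length xs. 0 \<le> ds ! i \<and> xs ! i \<in> deg A (ds ! i))
      \<and> inj_on (mono A xs) (Adm ds)
      \<and> \<not> module.dependent (smult A) (mono A xs ` Adm ds)
      \<and> module.span (smult A) (mono A xs ` Adm ds) = UNIV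
      \<and> (\<forall>p n. W A p n = module.span (smult A)
            (mono A xs ` {e \<in> Adm ds. mdeg ds e = n \<and> mwt ws e \<le> p}))
      \<and> (\<forall>i<length xs. dif A (xs ! i) \<in> module.span (smult A)
            (mono A xs ` {e \<in> Adm ds. mdeg ds e = ds ! i + 1 \<and> mwt ws e \<le> ws ! i - r
                                    \<and> (\<forall>j. i \<le> j \<and> j < length xs \<longrightarrow> e ! j = 0)})))"

end

theory Submission
  imports Defs
begin


locale fd =
  fixes A :: "('k::field, 'v::ab_group_add) fdga"
  assumes fd: "is_fdga A"
begin

lemma vs: "vector_space (smult A)" using fd unfolding is_fdga_def by (elim conjE) assumption
sublocale vs: vector_space "smult A" by (rule vs)

lemma W_sub_all: "\<forall>p n. vs.subspace (W A p n)" using fd unfolding is_fdga_def by (elim conjE) assumption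
lemma W_step_all: "\<forall>p n. W A p n \<subseteq> W A (p + 1) n" using fd unfolding is_fdga_def by (elim conjE) assumption
lemma W_deg_all: "\<forall>p n. W A p n \<subseteq> deg A n" using fd unfolding is_fdga_def by (elim conjE) assumption
lemma W_exh_all: "\<forall>n. (\<Union>p. W A p n) = deg A n" using fd unfolding is_fdga_def by (elim conjE) assumption
lemma W_reg_all: "\<forall>n. \<exists>q. W A q n = {0}" using fd unfolding is_fdga_def by (elim conjE) assumption
lemma W_dif_all: "\<forall>p n. dif A ` W A p n \<subseteq> W A p (n + 1)" using fd unfolding is_fdga_def by (elim conjE) assumption
lemma W_mul_all: "\<forall>p q n m a b. a \<in> W A p n \<longrightarrow> b \<in> W A q m \<longrightarrow> mul A a b \<in> W A (p + q) (n + m)" using fd unfolding is_fdga_def by (elim conjE) assumption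
lemma one_W: "one A \<in> W A 0 0" using fd unfolding is_fdga_def by (elim conjE) assumption
lemma one_deg: "one A \<in> deg A 0" using fd unfolding is_fdga_def by (elim conjE) assumption
lemma mul_add_all: "\<forall>a b c. mul A (a + b) c = mul A a c + mul A b c \<and> mul A a (b + c) = mul A a b + mul A a c" using fd unfolding is_fdga_def by (elim conjE) assumption
lemma mul_scale_all: "\<forall>k a b. mul A (smult A k a) b = smult A k (mul A a b) \<and> mul A a (smult A k b) = smult A k (mul A a b)" using fd unfolding is_fdga_def by (elim conjE) assumption
lemma mul_assoc_all: "\<forall>a b c. mul A (mul A a b) c = mul A a (mul A b c)" using fd unfolding is_fdga_def by (elim conjE) assumption
lemma one_all: "\<forall>a. mul A (one A) a = a \<and> mul A a (one A) = a" using fd unfolding is_fdga_def by (elim conjE) assumption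
lemma dif_add_all: "\<forall>a b. dif A (a + b) = dif A a + dif A b" using fd unfolding is_fdga_def by (elim conjE) assumption
lemma dif_scale_all: "\<forall>k a. dif A (smult A k a) = smult A k (dif A a)" using fd unfolding is_fdga_def by (elim conjE) assumption
lemma leibniz_all: "\<forall>n a b. a \<in> deg A n \<longrightarrow>
        dif A (mul A a b) = mul A (dif A a) b + (if even n then mul A a (dif A b) else - mul A a (dif A b))" using fd unfolding is_fdga_def by (elim conjE) assumption
lemma deg_span_all: "\<forall>v. \<exists>g P. finite P \<and> (\<forall>n\<in>P. g n \<in> deg A n) \<and> v = sum g P" using fd unfolding is_fdga_def by (elim conjE) assumption
lemma deg_indep_all: "\<forall>g P. finite P \<and> (\<forall>n\<in>P. g n \<in> deg A n) \<and> sum g P = 0 \<longrightarrow> (\<forall>n\<in>P. g n = 0)" using fd unfolding is_fdga_def by (elim conjE) assumption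
lemma deg_sub_all: "\<forall>n. vs.subspace (deg A n)" using fd unfolding is_fdga_def by (elim conjE) assumption

lemma W_sub: "vs.subspace (W A p n)" using W_sub_all by blast
lemma W_step: "W A p n \<subseteq> W A (p+1) n" using W_step_all by blast
lemma W_deg: "W A p n \<subseteq> deg A n" using W_deg_all by blast
lemma W_exh: "v \<in> deg A n \<Longrightarrow> \<exists>p. v \<in> W A p n" using W_exh_all by blast
lemma W_dif: "a \<in> W A p n \<Longrightarrow> dif A a \<in> W A p (n+1)" using W_dif_all by blast
lemma W_mul: "a \<in> W A p n \<Longrightarrow> b \<in> W A q m \<Longrightarrow> mul A a b \<in> W A (p+q) (n+m)"
  using W_mul_all by blast
lemma mul_add_left: "mul A (a + b) c = mul A a c + mul A b c" using mul_add_all by blast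
lemma mul_add_right: "mul A a (b + c) = mul A a b + mul A a c" using mul_add_all by blast
lemma mul_scale_left: "mul A (smult A k a) b = smult A k (mul A a b)" using mul_scale_all by blast
lemma mul_scale_right: "mul A a (smult A k b) = smult A k (mul A a b)" using mul_scale_all by blast
lemma mul_assoc: "mul A (mul A a b) c = mul A a (mul A b c)" using mul_assoc_all by blast
lemma one_mul[simp]: "mul A (one A) a = a" using one_all by blast
lemma mul_one[simp]: "mul A a (one A) = a" using one_all by blast
lemma dif_add: "dif A (a + b) = dif A a + dif A b" using dif_add_all by blast
lemma dif_scale: "dif A (smult A k a) = smult A k (dif A a)" using dif_scale_all by blast
lemma leibniz: "a \<in> deg A n \<Longrightarrow> dif A (mul A a b) =
   mul A (dif A a) b + (if even n then mul A a (dif A b) else - mul A a (dif A b))"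
  using leibniz_all by blast
lemma deg_span: "\<exists>g P. finite P \<and> (\<forall>n\<in>P. g n \<in> deg A n) \<and> v = sum g P"
  using deg_span_all by blast
lemma deg_indep: "finite P \<Longrightarrow> (\<forall>n\<in>P. g n \<in> deg A n) \<Longrightarrow> sum g P = 0 \<Longrightarrow> n \<in> P \<Longrightarrow> g n = 0"
  using deg_indep_all by blast
lemma deg_sub: "vs.subspace (deg A n)" using deg_sub_all by blast
lemma W_reg: "\<exists>q. W A q n = {0}" using W_reg_all by blast

lemma W_mono_nat: "W A p n \<subseteq> W A (p + int k) n"
proof (induction k)
  case 0 then show ?case by simp
next
  case (Suc k)
  then show ?case using W_step[of "p + int k" n] by (simp add: ac_simps)
qed

lemma W_mono: "p \<le> q \<Longrightarrow> W A p n \<subseteq> W A q n"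
  using W_mono_nat[of p n "nat (q - p)"] by simp

lemma W_0: "0 \<in> W A p n" using vs.subspace_0[OF W_sub] .
lemma W_add: "a \<in> W A p n \<Longrightarrow> b \<in> W A p n \<Longrightarrow> a + b \<in> W A p n" using vs.subspace_add[OF W_sub] .
lemma W_diff: "a \<in> W A p n \<Longrightarrow> b \<in> W A p n \<Longrightarrow> a - b \<in> W A p n" using vs.subspace_diff[OF W_sub] .
lemma W_neg: "a \<in> W A p n \<Longrightarrow> - a \<in> W A p n" using vs.subspace_neg[OF W_sub] .
lemma W_scale: "a \<in> W A p n \<Longrightarrow> smult A c a \<in> W A p n" using vs.subspace_scale[OF W_sub] .
lemma W_sum: "(\<And>x. x \<in> B \<Longrightarrow> f x \<in> W A p n) \<Longrightarrow> sum f B \<in> W A p n" using vs.subspace_sum[OF W_sub] .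

lemma W_bot: "\<exists>q. \<forall>p\<le>q. W A p n = {0}"
proof -
  obtain q where "W A q n = {0}" using W_reg by blast
  then have "\<forall>p\<le>q. W A p n = {0}" using W_mono W_0 by blast
  then show ?thesis by blast
qed

sublocale dif_add: additive "dif A" by standard (rule dif_add)

lemma mul_zero_left[simp]: "mul A 0 b = 0"
  using mul_add_left[of 0 0 b] by simp
lemma mul_zero_right[simp]: "mul A a 0 = 0"
  using mul_add_right[of a 0 0] by simp
lemma mul_neg_left: "mul A (- a) b = - mul A a b"
  using mul_add_left[of a "-a" b] by (simp add: eq_neg_iff_add_eq_0 add.commute)
lemma mul_neg_right: "mul A a (- b) = - mul A a b"
  using mul_add_right[of a b "-b"] by (simp add: eq_neg_iff_add_eq_0 add.commute)
lemma mul_diff_left: "mul A (a - b) c = mul A a c - mul A b c"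
  using mul_add_left[of a "-b" c] by (simp add: mul_neg_left)
lemma mul_diff_right: "mul A a (b - c) = mul A a b - mul A a c"
  using mul_add_right[of a b "-c"] by (simp add: mul_neg_right)
lemma mul_sum_left: "mul A (sum f P) b = (\<Sum>i\<in>P. mul A (f i) b)"
  by (induction P rule: infinite_finite_induct) (auto simp: mul_add_left)
lemma mul_sum_right: "mul A a (sum f P) = (\<Sum>i\<in>P. mul A a (f i))"
  by (induction P rule: infinite_finite_induct) (auto simp: mul_add_right)

lemma dif_one: "dif A (one A) = 0"
proof -
  have "dif A (mul A (one A) (one A)) = dif A (one A) + dif A (one A)"
    using leibniz[OF one_deg, of "one A"] by simp
  then show ?thesis by simp
qed

end




context fd begin

definition Pr where "Pr r a p n \<longleftrightarrow> a \<in> W A p n \<and> dif A a \<in> W A (p - r) (n+1)"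

lemma Pr_one: "Pr r (one A) 0 0"
  unfolding Pr_def using one_W dif_one W_0 by simp

lemma Pr_mul: assumes "Pr r a p n" "Pr r b q m" shows "Pr r (mul A a b) (p+q) (n+m)"
proof -
  have a: "a \<in> W A p n" "dif A a \<in> W A (p - r) (n+1)" and b: "b \<in> W A q m" "dif A b \<in> W A (q - r) (m+1)"
    using assms by (auto simp: Pr_def)
  have ad: "a \<in> deg A n" using a W_deg by blast
  have 1: "mul A (dif A a) b \<in> W A (p + q - r) (n + m + 1)"
    using W_mul[OF a(2) b(1)] by (simp add: algebra_simps)
  have 2: "mul A a (dif A b) \<in> W A (p + q - r) (n + m + 1)"
    using W_mul[OF a(1) b(2)] by (simp add: algebra_simps)
  have "dif A (mul A a b) \<in> W A (p + q - r) (n + m + 1)"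
    unfolding leibniz[OF ad] using 1 2 W_add W_neg by auto
  moreover have "mul A a b \<in> W A (p+q) (n+m)" using W_mul[OF a(1) b(1)] .
  ultimately show ?thesis by (simp add: Pr_def)
qed

lemma mpow_0[simp]: "mpow A x 0 = one A" by (simp add: mpow_def)
lemma mpow_Suc: "mpow A x (Suc k) = mul A x (mpow A x k)" by (simp add: mpow_def)
lemma mpow_1[simp]: "mpow A x 1 = x" by (simp add: mpow_def)
lemma mpow_Suc0[simp]: "mpow A x (Suc 0) = x" by (simp add: mpow_def)

lemma Pr_mpow: assumes "Pr r x p n" shows "Pr r (mpow A x k) (int k * p) (int k * n)"
proof (induction k)
  case 0 then show ?case using Pr_one by simp
next
  case (Suc k)
  have "Pr r (mul A x (mpow A x k)) (p + int k * p) (n + int k * n)"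
    using Pr_mul[OF assms Suc] .
  then show ?case by (simp add: mpow_Suc algebra_simps)
qed

lemma Pr_foldr: assumes "\<forall>i\<in>set L. Pr r (xs!i) (ws!i) (ds!i)"
  shows "Pr r (foldr (\<lambda>i acc. mul A (mpow A (xs!i) (e!i)) acc) L (one A))
     (\<Sum>i\<leftarrow>L. int (e!i) * ws!i) (\<Sum>i\<leftarrow>L. int (e!i) * ds!i)"
  using assms
proof (induction L)
  case Nil then show ?case using Pr_one by simp
next
  case (Cons j L)
  then show ?case using Pr_mul[OF Pr_mpow[of r "xs!j" "ws!j" "ds!j" "e!j"]] by simp
qed

lemma foldr_unit: assumes "distinct L" "\<forall>j\<in>set L. j < N" "i < N"
  shows "foldr (\<lambda>j acc. mul A (mpow A (xs!j) (((replicate N 0)[i := 1]) ! j)) acc) L (one A)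
     = (if i \<in> set L then xs!i else one A)"
  using assms
proof (induction L)
  case Nil then show ?case by simp
next
  case (Cons j L)
  then show ?case by (auto simp: nth_list_update)
qed

lemma cof_pure: assumes "Er_cofibrant_fg A r" "a \<in> W A p n"
  shows "dif A a \<in> W A (p - r) (n + 1)"
proof -
  obtain xs ds ws where H: "length ds = length xs \<and> length ws = length xs
      \<and> (\<forall>i<length xs. 0 \<le> ds ! i \<and> xs ! i \<in> deg A (ds ! i))
      \<and> inj_on (mono A xs) (Adm ds)
      \<and> \<not> module.dependent (smult A) (mono A xs ` Adm ds)
      \<and> module.span (smult A) (mono A xs ` Adm ds) = UNIV
      \<and> (\<forall>p n. W A p n = module.span (smult A)
            (mono A xs ` {e \<in> Adm ds. mdeg ds e = n \<and> mwt ws e \<le> p}))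
      \<and> (\<forall>i<length xs. dif A (xs ! i) \<in> module.span (smult A)
            (mono A xs ` {e \<in> Adm ds. mdeg ds e = ds ! i + 1 \<and> mwt ws e \<le> ws ! i - r
                                    \<and> (\<forall>j. i \<le> j \<and> j < length xs \<longrightarrow> e ! j = 0)}))"
    using assms(1)[unfolded Er_cofibrant_fg_def, THEN conjunct2] apply (elim exE) apply (erule that) done
  note L = H[THEN conjunct1] H[THEN conjunct2, THEN conjunct1]
  note WW = H[THEN conjunct2, THEN conjunct2, THEN conjunct2, THEN conjunct2, THEN conjunct2, THEN conjunct2, THEN conjunct1]
  note D = H[THEN conjunct2, THEN conjunct2, THEN conjunct2, THEN conjunct2, THEN conjunct2, THEN conjunct2, THEN conjunct2]
  define N where "N = length xs"
  define u where "u i = (replicate N 0)[i := (1::nat)]" for i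
  have u_nth: "u i ! j = (if j = i then 1 else 0)" if "i < N" "j < N" for i j
    using that by (auto simp: u_def nth_list_update)
  have mono_u: "mono A xs (u i) = xs ! i" if "i < N" for i
    unfolding mono_def u_def N_def[symmetric] using foldr_unit[of "[0..<N]" N i xs] that by simp
  have sumlist: "(\<Sum>j\<leftarrow>[0..<N]. g j) = (\<Sum>j<N. g j)" for g :: "nat \<Rightarrow> int"
    by (simp add: sum_set_upt_conv_sum_list_nat[symmetric] atLeast0LessThan)
  have mdeg_u: "mdeg ds (u i) = ds ! i" if "i < N" for i
  proof -
    have "mdeg ds (u i) = (\<Sum>j<N. if j = i then ds ! j else 0)"
      unfolding mdeg_def L(1) N_def[symmetric] by (rule sum.cong) (auto simp: u_nth that)
    then show ?thesis using that by simp
  qed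
  have mwt_u: "mwt ws (u i) = ws ! i" if "i < N" for i
  proof -
    have "mwt ws (u i) = (\<Sum>j<N. if j = i then ws ! j else 0)"
      unfolding mwt_def L(2) N_def[symmetric] by (rule sum.cong) (auto simp: u_nth that)
    then show ?thesis using that by simp
  qed
  have u_Adm: "u i \<in> Adm ds" if "i < N" for i
    using that L(1) by (auto simp: Adm_def u_def N_def nth_list_update)
  have gen: "Pr r (xs ! i) (ws ! i) (ds ! i)" if "i < N" for i
  proof -
    have "u i \<in> {e \<in> Adm ds. mdeg ds e = ds ! i \<and> mwt ws e \<le> ws ! i}"
      using mdeg_u[OF that] mwt_u[OF that] u_Adm[OF that] by simp
    then have "mono A xs (u i) \<in> mono A xs ` {e \<in> Adm ds. mdeg ds e = ds ! i \<and> mwt ws e \<le> ws ! i}"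
      by (rule imageI)
    then have "xs ! i \<in> vs.span (mono A xs ` {e \<in> Adm ds. mdeg ds e = ds ! i \<and> mwt ws e \<le> ws ! i})"
      unfolding mono_u[OF that] by (rule vs.span_base)
    then have 1: "xs ! i \<in> W A (ws ! i) (ds ! i)" using WW[rule_format, of "ws ! i" "ds ! i"] by simp
    have sub: "mono A xs ` {e \<in> Adm ds. mdeg ds e = ds ! i + 1 \<and> mwt ws e \<le> ws ! i - r
                                    \<and> (\<forall>j. i \<le> j \<and> j < length xs \<longrightarrow> e ! j = 0)}
       \<subseteq> mono A xs ` {e \<in> Adm ds. mdeg ds e = ds ! i + 1 \<and> mwt ws e \<le> ws ! i - r}"
      by (intro image_mono) blast
    have "dif A (xs ! i) \<in> vs.span (mono A xs ` {e \<in> Adm ds. mdeg ds e = ds ! i + 1 \<and> mwt ws e \<le> ws ! i - r})"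
      using D[rule_format, of i] that N_def vs.span_mono[OF sub] by blast
    then have 2: "dif A (xs ! i) \<in> W A (ws ! i - r) (ds ! i + 1)" using WW[rule_format, of "ws ! i - r" "ds ! i + 1"] by simp
    show ?thesis using 1 2 by (simp add: Pr_def)
  qed
  have mono_Pr: "Pr r (mono A xs e) (mwt ws e) (mdeg ds e)" if "e \<in> Adm ds" for e
  proof -
    have "Pr r (mono A xs e) (\<Sum>j\<leftarrow>[0..<N]. int (e!j) * ws!j) (\<Sum>j\<leftarrow>[0..<N]. int (e!j) * ds!j)"
      unfolding mono_def N_def[symmetric] by (rule Pr_foldr) (use gen in auto)
    then show ?thesis unfolding mwt_def mdeg_def L(1) L(2) N_def[symmetric] sumlist .
  qed
  let ?U = "{a. dif A a \<in> W A (p - r) (n + 1)}"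
  have U: "vs.subspace ?U"
    unfolding vs.subspace_def using W_0 W_add W_scale by (auto simp: dif_add dif_scale dif_add.zero)
  have "mono A xs ` {e \<in> Adm ds. mdeg ds e = n \<and> mwt ws e \<le> p} \<subseteq> ?U"
  proof
    fix x assume "x \<in> mono A xs ` {e \<in> Adm ds. mdeg ds e = n \<and> mwt ws e \<le> p}"
    then obtain e where e: "e \<in> Adm ds" "mdeg ds e = n" "mwt ws e \<le> p" "x = mono A xs e" by blast
    have "dif A x \<in> W A (mwt ws e - r) (n + 1)" using mono_Pr[OF e(1)] e by (simp add: Pr_def)
    moreover have "W A (mwt ws e - r) (n + 1) \<subseteq> W A (p - r) (n + 1)" using e(3) W_mono by simp
    ultimately show "x \<in> ?U" by blast
  qed
  then have "W A p n \<subseteq> ?U" using vs.span_minimal[OF _ U] WW by simp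
  then show ?thesis using assms(2) by blast
qed

end



lemma co_mem: "x \<in> (\<lambda>y. z + y) ` U \<longleftrightarrow> x - z \<in> (U :: 'a::ab_group_add set)"
proof
  assume "x \<in> (\<lambda>y. z + y) ` U" then obtain y where "y \<in> U" "x = z + y" by blast
  then show "x - z \<in> U" by simp
next
  assume "x - z \<in> U" then have "z + (x - z) \<in> (\<lambda>y. z + y) ` U" by (rule imageI)
  then show "x \<in> (\<lambda>y. z + y) ` U" by simp
qed

locale pf = fd A for A :: "('k::field, 'v::ab_group_add) fdga" +
  fixes r :: int
  assumes pure: "a \<in> W A p n \<Longrightarrow> dif A a \<in> W A (p - r) (n + 1)"
begin

lemma Zs_eq: "Zs A r p n = W A p n"
  unfolding Zs_def using pure by blast

lemma Zs_pred: "Zs A (r - 1) (p - 1) n = W A (p - 1) n"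
proof -
  have "dif A a \<in> W A (p - 1 - (r - 1)) (n + 1)" if "a \<in> W A (p - 1) n" for a
  proof -
    have "dif A a \<in> W A (p - 1 - r) (n + 1)" using pure[OF that] .
    moreover have "W A (p - 1 - r) (n + 1) \<subseteq> W A (p - 1 - (r - 1)) (n + 1)" by (rule W_mono) simp
    ultimately show ?thesis by blast
  qed
  then show ?thesis unfolding Zs_def by blast
qed

lemma Bs_sub: "Bs A (r - 1) p n \<subseteq> W A (p - 1) n"
proof
  fix a assume "a \<in> Bs A (r - 1) p n"
  then obtain b where b: "b \<in> W A (p + (r - 1)) (n - 1)" "a = dif A b" unfolding Bs_def by blast
  have "dif A b \<in> W A (p + (r - 1) - r) (n - 1 + 1)" using pure[OF b(1)] .
  then show "a \<in> W A (p - 1) n" using b(2) by simp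
qed

lemma Bs_0: "0 \<in> Bs A (r - 1) p n"
  unfolding Bs_def using W_0 dif_add.zero by (auto intro!: bexI[of _ 0])

lemma Dd_eq: "Ddenom A r p n = W A (p - 1) n"
proof
  show "Ddenom A r p n \<subseteq> W A (p - 1) n"
    unfolding Ddenom_def Zs_pred using Bs_sub W_add by blast
  show "W A (p - 1) n \<subseteq> Ddenom A r p n"
  proof
    fix a assume "a \<in> W A (p - 1) n"
    then have "a = a + 0 \<and> a \<in> Zs A (r - 1) (p - 1) n \<and> 0 \<in> Bs A (r - 1) p n"
      using Zs_pred Bs_0 by simp
    then show "a \<in> Ddenom A r p n" unfolding Ddenom_def by blast
  qed
qed

lemma cls_eq: "cls A r p n z = (\<lambda>y. z + y) ` W A (p - 1) n"
  unfolding cls_def Dd_eq ..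

lemma cls_mem: "x \<in> cls A r p n z \<longleftrightarrow> x - z \<in> W A (p - 1) n"
  unfolding cls_eq co_mem ..

lemma cls_eq_iff: "cls A r p n a = cls A r p n b \<longleftrightarrow> a - b \<in> W A (p - 1) n"
proof
  assume "cls A r p n a = cls A r p n b"
  moreover have "a \<in> cls A r p n a" using W_0 cls_mem by simp
  ultimately show "a - b \<in> W A (p - 1) n" using cls_mem by blast
next
  assume H: "a - b \<in> W A (p - 1) n"
  show "cls A r p n a = cls A r p n b"
  proof (rule set_eqI)
    fix x
    have "x - a \<in> W A (p - 1) n \<longleftrightarrow> x - b \<in> W A (p - 1) n"
    proof
      assume "x - a \<in> W A (p - 1) n" then have "(x - a) + (a - b) \<in> W A (p - 1) n" using H W_add by blast
      then show "x - b \<in> W A (p - 1) n" by simp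
    next
      assume "x - b \<in> W A (p - 1) n" then have "(x - b) - (a - b) \<in> W A (p - 1) n" using H W_diff by blast
      then show "x - a \<in> W A (p - 1) n" by simp
    qed
    then show "x \<in> cls A r p n a \<longleftrightarrow> x \<in> cls A r p n b" using cls_mem by blast
  qed
qed

lemma self_cls: "z \<in> cls A r p n z" using W_0 cls_mem by simp

lemma rep_cls: "rep (cls A r p n z) - z \<in> W A (p - 1) n"
proof -
  have "rep (cls A r p n z) \<in> cls A r p n z" unfolding rep_def using self_cls by (rule someI)
  then show ?thesis using cls_mem by blast
qed

lemma cls_rep: "cls A r p n (rep (cls A r p n z)) = cls A r p n z"
  using rep_cls cls_eq_iff by blast

lemma Ep_iff: "X \<in> Ep A r p n \<longleftrightarrow> (\<exists>z \<in> W A p n. X = cls A r p n z)"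
  unfolding Ep_def Zs_eq by blast

lemma cls_in_Ep: "z \<in> W A p n \<Longrightarrow> cls A r p n z \<in> Ep A r p n"
  using Ep_iff by blast

lemma Wpred_sub: "W A (p - 1) n \<subseteq> W A p n" by (rule W_mono) simp

lemma rep_Ep: assumes "X \<in> Ep A r p n" shows "rep X \<in> W A p n" "cls A r p n (rep X) = X"
proof -
  obtain z where z: "z \<in> W A p n" "X = cls A r p n z" using assms Ep_iff by blast
  have "rep X - z \<in> W A p n" using rep_cls z(2) Wpred_sub by blast
  then have "(rep X - z) + z \<in> W A p n" using z(1) W_add by blast
  then show "rep X \<in> W A p n" by simp
  show "cls A r p n (rep X) = X" using z(2) cls_rep by simp
qed

lemma E_add_cls: "E_add (cls A r p n a) (cls A r p n b) = cls A r p n (a + b)"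
proof (rule set_eqI)
  fix x
  show "x \<in> E_add (cls A r p n a) (cls A r p n b) \<longleftrightarrow> x \<in> cls A r p n (a + b)"
  proof
    assume "x \<in> E_add (cls A r p n a) (cls A r p n b)"
    then obtain x1 x2 where x: "x = x1 + x2" "x1 \<in> cls A r p n a" "x2 \<in> cls A r p n b"
      unfolding E_add_def by blast
    have "(x1 - a) + (x2 - b) \<in> W A (p - 1) n" using x cls_mem W_add by blast
    then show "x \<in> cls A r p n (a + b)" using x(1) cls_mem by (simp add: algebra_simps)
  next
    assume "x \<in> cls A r p n (a + b)"
    then have "x - a \<in> cls A r p n b" using cls_mem by (simp add: algebra_simps)
    moreover have "a \<in> cls A r p n a" by (rule self_cls)
    moreover have "x = a + (x - a)" by simp
    ultimately show "x \<in> E_add (cls A r p n a) (cls A r p n b)" unfolding E_add_def by blast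
  qed
qed

lemma E_smult_cls: "E_smult A r p n c (cls A r p n z) = cls A r p n (smult A c z)"
proof -
  have "smult A c (rep (cls A r p n z) - z) \<in> W A (p - 1) n" using rep_cls W_scale by blast
  then show ?thesis unfolding E_smult_def cls_eq_iff by (simp add: vs.scale_right_diff_distrib)
qed

lemma E_mul_cls: assumes a: "a \<in> W A p n" and b: "b \<in> W A p' n'"
  shows "E_mul A r (p + p') (n + n') (cls A r p n a) (cls A r p' n' b) = cls A r (p + p') (n + n') (mul A a b)"
proof -
  define u where "u = rep (cls A r p n a) - a"
  define v where "v = rep (cls A r p' n' b) - b"
  have u: "u \<in> W A (p - 1) n" and v: "v \<in> W A (p' - 1) n'" using rep_cls u_def v_def by auto
  have 1: "mul A a v \<in> W A (p + p' - 1) (n + n')" using W_mul[OF a v] by (simp add: algebra_simps)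
  have 2: "mul A u b \<in> W A (p + p' - 1) (n + n')" using W_mul[OF u b] by (simp add: algebra_simps)
  have "mul A u v \<in> W A (p - 1 + (p' - 1)) (n + n')" using W_mul[OF u v] .
  moreover have "W A (p - 1 + (p' - 1)) (n + n') \<subseteq> W A (p + p' - 1) (n + n')" by (rule W_mono) simp
  ultimately have 3: "mul A u v \<in> W A (p + p' - 1) (n + n')" by blast
  have e: "mul A (a + u) (b + v) - mul A a b = mul A a v + mul A u b + mul A u v"
    by (simp add: mul_add_left mul_add_right algebra_simps)
  have "mul A (a + u) (b + v) - mul A a b \<in> W A (p + p' - 1) (n + n')"
    unfolding e using 1 2 3 W_add by blast
  moreover have "rep (cls A r p n a) = a + u" "rep (cls A r p' n' b) = b + v" using u_def v_def by simp_all
  ultimately show ?thesis unfolding E_mul_def cls_eq_iff by simp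
qed

lemma E_d_cls: assumes "a \<in> W A p n"
  shows "E_d A r p n (cls A r p n a) = cls A r (p - r) (n + 1) (dif A a)"
proof -
  have "dif A (rep (cls A r p n a) - a) \<in> W A (p - 1 - r) (n + 1)" using pure[OF rep_cls] .
  then have "dif A (rep (cls A r p n a)) - dif A a \<in> W A (p - r - 1) (n + 1)"
    by (simp add: dif_add.diff algebra_simps)
  then show ?thesis unfolding E_d_def cls_eq_iff .
qed

lemma E_one_eq: "E_one A r = cls A r 0 0 (one A)" by (simp add: E_one_def)

end




context pf begin

lemma E_smult_Ep: "X \<in> Ep A r p n \<Longrightarrow> E_smult A r p n c X \<in> Ep A r p n"
  unfolding E_smult_def by (intro cls_in_Ep W_scale rep_Ep)

lemma E_smult_comp: "X \<in> Ep A r p n \<Longrightarrow> E_smult A r p n c' (E_smult A r p n c X) = E_smult A r p n (c' * c) X"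
  unfolding E_smult_def[of A r p n c X] E_smult_cls by (simp add: E_smult_def)

lemma E_smult_one: "X \<in> Ep A r p n \<Longrightarrow> E_smult A r p n 1 X = X"
  unfolding E_smult_def using rep_Ep by simp

lemma bigr_cls: "bigrading_aut A r \<alpha> p n (cls A r p n z) = cls A r p n (smult A (\<alpha> powi (n * r + p)) z)"
  unfolding bigrading_aut_def E_smult_cls ..

lemma bigr_aut: assumes a0: "\<alpha> \<noteq> 0" shows "Er_aut A r (bigrading_aut A r \<alpha>)"
proof -
  let ?\<phi> = "bigrading_aut A r \<alpha>"
  have bij: "bij_betw (?\<phi> p n) (Ep A r p n) (Ep A r p n)" for p n
  proof (rule bij_betw_byWitness[where f' = "bigrading_aut A r (inverse \<alpha>) p n"])
    have nz: "\<alpha> powi (n * r + p) \<noteq> 0" using a0 by (simp add: power_int_not_zero)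
    show "\<forall>X\<in>Ep A r p n. bigrading_aut A r (inverse \<alpha>) p n (?\<phi> p n X) = X"
      unfolding bigrading_aut_def using nz by (simp add: E_smult_comp E_smult_one power_int_inverse)
    show "\<forall>X\<in>Ep A r p n. ?\<phi> p n (bigrading_aut A r (inverse \<alpha>) p n X) = X"
      unfolding bigrading_aut_def using nz by (simp add: E_smult_comp E_smult_one power_int_inverse)
    show "?\<phi> p n ` Ep A r p n \<subseteq> Ep A r p n"
      unfolding bigrading_aut_def using E_smult_Ep by (simp add: image_subset_iff)
    show "bigrading_aut A r (inverse \<alpha>) p n ` Ep A r p n \<subseteq> Ep A r p n"
      unfolding bigrading_aut_def using E_smult_Ep by (simp add: image_subset_iff)
  qed
  have add: "?\<phi> p n (E_add X Y) = E_add (?\<phi> p n X) (?\<phi> p n Y)"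
    if H: "X \<in> Ep A r p n" "Y \<in> Ep A r p n" for p n X Y
  proof -
    obtain a where "X = cls A r p n a" using Ep_iff[THEN iffD1, OF H(1)] by blast
    moreover obtain b where "Y = cls A r p n b" using Ep_iff[THEN iffD1, OF H(2)] by blast
    ultimately show ?thesis by (simp add: E_add_cls bigr_cls vs.scale_right_distrib)
  qed
  have sm: "?\<phi> p n (E_smult A r p n c X) = E_smult A r p n c (?\<phi> p n X)"
    if H: "X \<in> Ep A r p n" for p n c X
  proof -
    obtain a where "X = cls A r p n a" using Ep_iff[THEN iffD1, OF H] by blast
    then show ?thesis by (simp add: E_smult_cls bigr_cls mult.commute)
  qed
  have mu: "?\<phi> (p + p') (n + n') (E_mul A r (p + p') (n + n') X Y)
          = E_mul A r (p + p') (n + n') (?\<phi> p n X) (?\<phi> p' n' Y)"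
    if H: "X \<in> Ep A r p n" "Y \<in> Ep A r p' n'" for p n p' n' X Y
  proof -
    obtain a where a: "a \<in> W A p n" "X = cls A r p n a" using Ep_iff[THEN iffD1, OF H(1)] by blast
    obtain b where b: "b \<in> W A p' n'" "Y = cls A r p' n' b" using Ep_iff[THEN iffD1, OF H(2)] by blast
    note ab = a b
    have e: "\<alpha> powi ((n + n') * r + (p + p')) = \<alpha> powi (n * r + p) * \<alpha> powi (n' * r + p')"
      using a0 by (simp add: power_int_add[symmetric] algebra_simps)
    have "?\<phi> (p + p') (n + n') (E_mul A r (p + p') (n + n') X Y)
        = cls A r (p + p') (n + n') (smult A (\<alpha> powi ((n + n') * r + (p + p'))) (mul A a b))"
      unfolding a(2) b(2) E_mul_cls[OF a(1) b(1)] bigr_cls ..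
    also have "\<dots> = cls A r (p + p') (n + n') (smult A (\<alpha> powi (n * r + p) * \<alpha> powi (n' * r + p')) (mul A a b))"
      unfolding e ..
    also have "\<dots> = cls A r (p + p') (n + n') (mul A (smult A (\<alpha> powi (n * r + p)) a) (smult A (\<alpha> powi (n' * r + p')) b))"
      by (simp add: mul_scale_left mul_scale_right mult.commute)
    also have "\<dots> = E_mul A r (p + p') (n + n') (cls A r p n (smult A (\<alpha> powi (n * r + p)) a)) (cls A r p' n' (smult A (\<alpha> powi (n' * r + p')) b))"
      by (rule E_mul_cls[symmetric]) (intro W_scale a(1) b(1))+
    also have "\<dots> = E_mul A r (p + p') (n + n') (?\<phi> p n X) (?\<phi> p' n' Y)"
      unfolding a(2) b(2) bigr_cls ..
    finally show ?thesis .
  qed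
  have dd: "?\<phi> (p - r) (n + 1) (E_d A r p n X) = E_d A r p n (?\<phi> p n X)"
    if H: "X \<in> Ep A r p n" for p n X
  proof -
    obtain a where a: "a \<in> W A p n" "X = cls A r p n a" using Ep_iff[THEN iffD1, OF H] by blast
    have e: "(n + 1) * r + (p - r) = n * r + p" by (simp add: algebra_simps)
    show ?thesis using a by (simp add: E_d_cls bigr_cls W_scale dif_scale e)
  qed
  have one: "?\<phi> 0 0 (E_one A r) = E_one A r"
    unfolding E_one_eq bigr_cls by simp
  show ?thesis unfolding Er_aut_def
    by (intro conjI allI ballI bij add sm mu dd one; assumption)
qed

end

lemma Er_map_cls_gen:
  assumes "pf A r" "pf B r" and add: "\<And>u v. F (u + v) = F u + F v"
    and fil: "\<And>p n. F ` W A p n \<subseteq> W B p n"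
  shows "Er_map A B r F p n (cls A r p n z) = cls B r p n (F z)"
proof -
  interpret a: pf A r by fact
  interpret b: pf B r by fact
  interpret F: additive F by standard (rule add)
  have "F (rep (cls A r p n z) - z) \<in> W B (p - 1) n" using a.rep_cls fil by blast
  then show ?thesis unfolding Er_map_def b.cls_eq_iff by (simp add: F.diff)
qed

locale pf2 = a: pf A r + b: pf B r
  for A :: "('k::field, 'v::ab_group_add) fdga" and B :: "('k, 'w::ab_group_add) fdga" and r +
  fixes f :: "'v \<Rightarrow> 'w"
  assumes hom: "fdga_hom A B f"
begin

lemma f_add_all: "\<forall>u v. f (u + v) = f u + f v" using hom unfolding fdga_hom_def by (elim conjE) assumption
lemma f_scale_all: "\<forall>c v. f (smult A c v) = smult B c (f v)" using hom unfolding fdga_hom_def by (elim conjE) assumption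
lemma f_W_all: "\<forall>p n. f ` W A p n \<subseteq> W B p n" using hom unfolding fdga_hom_def by (elim conjE) assumption
lemma f_mul_all: "\<forall>u v. f (mul A u v) = mul B (f u) (f v)" using hom unfolding fdga_hom_def by (elim conjE) assumption
lemma f_dif_all: "\<forall>v. f (dif A v) = dif B (f v)" using hom unfolding fdga_hom_def by (elim conjE) assumption
lemma f_one: "f (one A) = one B" using hom unfolding fdga_hom_def by (elim conjE) assumption
lemma f_add: "f (u + v) = f u + f v" using f_add_all by blast
lemma f_scale: "f (smult A c v) = smult B c (f v)" using f_scale_all by blast
lemma f_W: "f ` W A p n \<subseteq> W B p n" using f_W_all by blast
lemma f_mul: "f (mul A u v) = mul B (f u) (f v)" using f_mul_all by blast
lemma f_dif: "f (dif A v) = dif B (f v)" using f_dif_all by blast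

sublocale fadd: additive f by standard (rule f_add)

lemma f_cls: "Er_map A B r f p n (cls A r p n z) = cls B r p n (f z)"
  by (rule Er_map_cls_gen) (fact a.pf_axioms b.pf_axioms f_add f_W)+

lemma bigr_AutE: assumes "\<alpha> \<noteq> 0"
  shows "AutE A B r f (bigrading_aut A r \<alpha>) (bigrading_aut B r \<alpha>)"
proof -
  have "Er_map A B r f p n (bigrading_aut A r \<alpha> p n X) = bigrading_aut B r \<alpha> p n (Er_map A B r f p n X)"
    if H: "X \<in> Ep A r p n" for p n X
  proof -
    obtain a where "X = cls A r p n a" using a.Ep_iff[THEN iffD1, OF H] by blast
    then show ?thesis by (simp add: a.bigr_cls b.bigr_cls f_cls f_scale)
  qed
  then show ?thesis unfolding AutE_def using a.bigr_aut[OF assms] b.bigr_aut[OF assms] by simp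
qed

end




lemma root_unity_int:
  fixes \<alpha> :: "'k::field"
  assumes a0: "\<alpha> \<noteq> 0" and nru: "\<forall>m::nat. 0 < m \<longrightarrow> \<alpha> ^ m \<noteq> 1" and k: "\<alpha> powi k = 1"
  shows "k = 0"
proof (rule ccontr)
  assume kn: "k \<noteq> 0"
  show False
  proof (cases "k > 0")
    case True
    then have "\<alpha> ^ nat k = 1" using k by (simp add: power_int_def)
    moreover have "0 < nat k" using True by simp
    ultimately show False using nru by blast
  next
    case False
    then have "inverse \<alpha> ^ nat (- k) = 1" using k kn by (simp add: power_int_def)
    then have "inverse (\<alpha> ^ nat (- k)) = 1" by (simp add: power_inverse)
    then have "\<alpha> ^ nat (- k) = 1" by simp
    moreover have "0 < nat (- k)" using False kn by simp
    ultimately show False using nru by blast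
  qed
qed

locale eig = pf A r for A :: "('k::field, 'v::ab_group_add) fdga" and r +
  fixes F :: "'v \<Rightarrow> 'v" and \<alpha> :: 'k
  assumes F_add: "F (u + v) = F u + F v"
    and F_scale: "F (smult A c v) = smult A c (F v)"
    and F_mul: "F (mul A u v) = mul A (F u) (F v)"
    and F_dif: "F (dif A v) = dif A (F v)"
    and F_W: "v \<in> W A p n \<Longrightarrow> F v \<in> W A p n"
    and gr: "z \<in> W A p n \<Longrightarrow> F z - smult A (\<alpha> powi (n * r + p)) z \<in> W A (p - 1) n"
    and a0: "\<alpha> \<noteq> 0" and nru: "\<forall>m::nat. 0 < m \<longrightarrow> \<alpha> ^ m \<noteq> 1"
begin

definition lam where "lam p n = \<alpha> powi (n * r + p)"
definition S where "S p n = {v \<in> W A p n. F v = smult A (lam p n) v}"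

sublocale Fadd: additive F by standard (rule F_add)

lemma lam_nz: "lam p n \<noteq> 0"
  unfolding lam_def using a0 by (simp add: power_int_not_zero)

lemma lam_inj: assumes "lam p n = lam q n" shows "p = q"
proof -
  have "\<alpha> powi ((n * r + p) - (n * r + q)) = lam p n / lam q n"
    unfolding lam_def using a0 by (rule power_int_diff[OF disjI1])
  also have "\<dots> = 1" using assms lam_nz by simp
  finally have "\<alpha> powi (p - q) = 1" by simp
  then have "p - q = 0" using root_unity_int[OF a0 nru] by blast
  then show ?thesis by simp
qed

lemma S_mem: "v \<in> S p n \<longleftrightarrow> v \<in> W A p n \<and> F v = smult A (lam p n) v"
  unfolding S_def by simp

lemma S_W: "S p n \<subseteq> W A p n" unfolding S_def by blast

lemma S_sub: "vs.subspace (S p n)"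
  unfolding vs.subspace_def
proof (intro conjI ballI allI)
  show "0 \<in> S p n" unfolding S_mem using W_0 by (simp add: Fadd.zero)
next
  fix x y assume "x \<in> S p n" "y \<in> S p n"
  then have x: "x \<in> W A p n" "F x = smult A (lam p n) x" and y: "y \<in> W A p n" "F y = smult A (lam p n) y"
    unfolding S_mem by auto
  show "x + y \<in> S p n" unfolding S_mem using W_add[OF x(1) y(1)] x(2) y(2)
    by (simp add: F_add vs.scale_right_distrib)
next
  fix c x assume "x \<in> S p n"
  then have x: "x \<in> W A p n" "F x = smult A (lam p n) x" unfolding S_mem by auto
  show "smult A c x \<in> S p n" unfolding S_mem using W_scale[OF x(1)] x(2)
    by (simp add: F_scale mult.commute)
qed

lemma S_scale: "v \<in> S p n \<Longrightarrow> smult A c v \<in> S p n" using vs.subspace_scale[OF S_sub] .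

lemma decomp_aux:
  assumes q: "\<forall>p\<le>q. W A p n = {0}"
  shows "\<forall>m v. nat (m - q) \<le> k \<longrightarrow> v \<in> W A m n \<longrightarrow>
     (\<exists>g P. finite P \<and> P \<subseteq> {..m} \<and> (\<forall>p\<in>P. g p \<in> S p n) \<and> v = sum g P)"
proof (induction k)
  case 0
  show ?case
  proof (intro allI impI)
    fix m v assume "nat (m - q) \<le> 0" "v \<in> W A m n"
    then have "v = 0" using q by simp
    then show "\<exists>g P. finite P \<and> P \<subseteq> {..m} \<and> (\<forall>p\<in>P. g p \<in> S p n) \<and> v = sum g P"
      by (intro exI[of _ "\<lambda>_. 0"] exI[of _ "{}"]) simp
  qed
next
  case (Suc k)
  show ?case
  proof (intro allI impI)
    fix m v assume mk: "nat (m - q) \<le> Suc k" and v: "v \<in> W A m n"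
    show "\<exists>g P. finite P \<and> P \<subseteq> {..m} \<and> (\<forall>p\<in>P. g p \<in> S p n) \<and> v = sum g P"
    proof (cases "m \<le> q")
      case True
      then have "v = 0" using q v by simp
      then show ?thesis by (intro exI[of _ "\<lambda>_. 0"] exI[of _ "{}"]) simp
    next
      case False
      define w where "w = F v - smult A (lam m n) v"
      have w: "w \<in> W A (m - 1) n" unfolding w_def lam_def using gr[OF v] .
      have "nat (m - 1 - q) \<le> k" using mk False by simp
      then have "\<exists>g P. finite P \<and> P \<subseteq> {..m - 1} \<and> (\<forall>p\<in>P. g p \<in> S p n) \<and> w = sum g P"
        using Suc.IH w by simp
      then obtain g P where gP: "finite P" "P \<subseteq> {..m - 1}" "\<forall>p\<in>P. g p \<in> S p n" "w = sum g P"
        by blast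
      have mP: "m \<notin> P" using gP(2) by auto
      have neq: "lam p n - lam m n \<noteq> 0" if "p \<in> P" for p
      proof
        assume "lam p n - lam m n = 0"
        then have "p = m" using lam_inj by simp
        then show False using that mP by simp
      qed
      define h where "h p = smult A (inverse (lam p n - lam m n)) (g p)" for p
      define s where "s = v - sum h P"
      have hS: "h p \<in> S p n" if "p \<in> P" for p unfolding h_def using gP(3) that S_scale by blast
      have hW: "h p \<in> W A m n" if "p \<in> P" for p
      proof -
        have "h p \<in> W A p n" using hS[OF that] S_W by blast
        moreover have "p \<le> m" using that gP(2) by auto
        ultimately show ?thesis using W_mono by blast
      qed
      have "sum h P \<in> W A m n" using hW by (rule W_sum)
      then have sW: "s \<in> W A m n" unfolding s_def using v by (rule W_diff[rotated])
      have Fh: "F (h p) = smult A (lam p n) (h p)" if "p \<in> P" for p using hS[OF that] S_mem by blast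
      have e1: "F s = F v - (\<Sum>p\<in>P. smult A (lam p n) (h p))"
        unfolding s_def Fadd.diff Fadd.sum using Fh by simp
      have e2: "smult A (lam m n) s = smult A (lam m n) v - (\<Sum>p\<in>P. smult A (lam m n) (h p))"
        unfolding s_def by (simp add: vs.scale_right_diff_distrib vs.scale_sum_right)
      have e3: "(\<Sum>p\<in>P. smult A (lam p n) (h p)) - (\<Sum>p\<in>P. smult A (lam m n) (h p)) = sum g P"
      proof -
        have "(\<Sum>p\<in>P. smult A (lam p n) (h p)) - (\<Sum>p\<in>P. smult A (lam m n) (h p))
            = (\<Sum>p\<in>P. smult A (lam p n) (h p) - smult A (lam m n) (h p))"
          by (simp add: sum_subtractf)
        also have "\<dots> = (\<Sum>p\<in>P. g p)"
        proof (rule sum.cong)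
          fix p assume p: "p \<in> P"
          have "smult A (lam p n) (h p) - smult A (lam m n) (h p) = smult A (lam p n - lam m n) (h p)"
            by (simp add: vs.scale_left_diff_distrib)
          also have "\<dots> = g p" unfolding h_def using neq[OF p] by simp
          finally show "smult A (lam p n) (h p) - smult A (lam m n) (h p) = g p" .
        qed simp
        finally show ?thesis .
      qed
      have "F s - smult A (lam m n) s = w - sum g P"
        unfolding e1 e2 w_def e3[symmetric] by (simp add: algebra_simps)
      then have "F s = smult A (lam m n) s" using gP(4) by simp
      then have sS: "s \<in> S m n" using sW S_mem by blast
      define g' where "g' = h(m := s)"
      have "v = s + sum h P" unfolding s_def by simp
      also have "sum h P = sum g' P" unfolding g'_def using mP by (intro sum.cong) auto
      also have "s + sum g' P = sum g' (insert m P)" using gP(1) mP g'_def by simp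
      finally have "v = sum g' (insert m P)" .
      moreover have "insert m P \<subseteq> {..m}" using gP(2) by auto
      moreover have "\<forall>p\<in>insert m P. g' p \<in> S p n" using hS sS mP g'_def by auto
      moreover have "finite (insert m P)" using gP(1) by simp
      ultimately show ?thesis by (intro exI[of _ g'] exI[of _ "insert m P"] conjI)
    qed
  qed
qed

lemma decomp: assumes "v \<in> W A m n"
  shows "\<exists>g P. finite P \<and> P \<subseteq> {..m} \<and> (\<forall>p\<in>P. g p \<in> S p n) \<and> v = sum g P"
proof -
  obtain q where q: "\<forall>p\<le>q. W A p n = {0}" using W_bot by blast
  show ?thesis using decomp_aux[OF q, of "nat (m - q)"] assms by blast
qed

end



context eig begin

lemma indep_deg: "finite P \<Longrightarrow> (\<forall>p\<in>P. g p \<in> S p n) \<Longrightarrow> sum g P = 0 \<Longrightarrow> (\<forall>p\<in>P. g p = 0)"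
proof (induction P arbitrary: g rule: finite_induct)
  case empty then show ?case by simp
next
  case (insert p0 P)
  have g0: "g p0 \<in> S p0 n" and gP: "\<forall>p\<in>P. g p \<in> S p n" using insert.prems(1) by auto
  have s0: "g p0 + sum g P = 0" using insert.prems(2) insert.hyps by simp
  have Fg: "F (g p) = smult A (lam p n) (g p)" if "p \<in> insert p0 P" for p
    using insert.prems(1) that S_mem by blast
  have "F (g p0 + sum g P) = 0" using s0 by (simp add: Fadd.zero)
  then have a: "smult A (lam p0 n) (g p0) + (\<Sum>p\<in>P. smult A (lam p n) (g p)) = 0"
    unfolding Fadd.add Fadd.sum using Fg by simp
  have b: "smult A (lam p0 n) (g p0) + (\<Sum>p\<in>P. smult A (lam p0 n) (g p)) = 0"
    using arg_cong[OF s0, of "smult A (lam p0 n)"] by (simp add: vs.scale_right_distrib vs.scale_sum_right)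
  define g2 where "g2 p = smult A (lam p n - lam p0 n) (g p)" for p
  have "sum g2 P = (\<Sum>p\<in>P. smult A (lam p n) (g p)) - (\<Sum>p\<in>P. smult A (lam p0 n) (g p))"
    unfolding g2_def by (simp add: vs.scale_left_diff_distrib sum_subtractf)
  also have "\<dots> = 0"
  proof -
    have "smult A (lam p0 n) (g p0) + (\<Sum>p\<in>P. smult A (lam p n) (g p))
        = smult A (lam p0 n) (g p0) + (\<Sum>p\<in>P. smult A (lam p0 n) (g p))" using a b by simp
    then show ?thesis by simp
  qed
  finally have s2: "sum g2 P = 0" .
  have "\<forall>p\<in>P. g2 p \<in> S p n" unfolding g2_def using gP S_scale by blast
  then have z2: "\<forall>p\<in>P. g2 p = 0" using insert.IH s2 by blast
  have zP: "\<forall>p\<in>P. g p = 0"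
  proof
    fix p assume p: "p \<in> P"
    have "lam p n - lam p0 n \<noteq> 0"
    proof
      assume "lam p n - lam p0 n = 0" then have "p = p0" using lam_inj by simp
      then show False using p insert.hyps by simp
    qed
    moreover have "smult A (lam p n - lam p0 n) (g p) = 0" using z2 p unfolding g2_def by blast
    ultimately show "g p = 0" by simp
  qed
  then have "sum g P = 0" by simp
  then have "g p0 = 0" using s0 by simp
  then show ?case using zP by simp
qed

lemma S_dif: "dif A ` S p n \<subseteq> S (p - r) (n + 1)"
proof
  fix x assume "x \<in> dif A ` S p n"
  then obtain v where v: "v \<in> S p n" "x = dif A v" by blast
  have vW: "v \<in> W A p n" and Fv: "F v = smult A (lam p n) v" using v(1) S_mem by auto
  have e: "lam (p - r) (n + 1) = lam p n" unfolding lam_def by (simp add: algebra_simps)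
  have "F (dif A v) = smult A (lam (p - r) (n + 1)) (dif A v)"
    unfolding F_dif Fv e by (simp add: dif_scale)
  then show "x \<in> S (p - r) (n + 1)" using pure[OF vW] v(2) S_mem by simp
qed

lemma S_mul: assumes a: "a \<in> S p n" and b: "b \<in> S p' n'" shows "mul A a b \<in> S (p + p') (n + n')"
proof -
  have aW: "a \<in> W A p n" and Fa: "F a = smult A (lam p n) a" using a S_mem by auto
  have bW: "b \<in> W A p' n'" and Fb: "F b = smult A (lam p' n') b" using b S_mem by auto
  have e: "lam (p + p') (n + n') = lam p n * lam p' n'"
    unfolding lam_def using a0 by (simp add: power_int_add[symmetric] algebra_simps)
  have "F (mul A a b) = smult A (lam p n * lam p' n') (mul A a b)"
    unfolding F_mul Fa Fb by (simp add: mul_scale_left mul_scale_right mult.commute)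
  then show ?thesis using W_mul[OF aW bW] S_mem e by simp
qed

lemma S_W_eq: "W A m n = {sum g P | g P. finite P \<and> P \<subseteq> {..m} \<and> (\<forall>p\<in>P. g p \<in> S p n)}"
proof (rule set_eqI)
  fix v
  show "v \<in> W A m n \<longleftrightarrow> v \<in> {sum g P | g P. finite P \<and> P \<subseteq> {..m} \<and> (\<forall>p\<in>P. g p \<in> S p n)}"
  proof
    assume "v \<in> W A m n"
    from decomp[OF this] obtain g P where H: "finite P \<and> P \<subseteq> {..m} \<and> (\<forall>p\<in>P. g p \<in> S p n) \<and> v = sum g P"
      by blast
    show "v \<in> {sum g P | g P. finite P \<and> P \<subseteq> {..m} \<and> (\<forall>p\<in>P. g p \<in> S p n)}"
      unfolding mem_Collect_eq using H by (intro exI[of _ g] exI[of _ P]) simp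
  next
    assume "v \<in> {sum g P | g P. finite P \<and> P \<subseteq> {..m} \<and> (\<forall>p\<in>P. g p \<in> S p n)}"
    then obtain g P where gP: "finite P" "P \<subseteq> {..m}" "\<forall>p\<in>P. g p \<in> S p n" "v = sum g P"
      unfolding mem_Collect_eq by (elim exE conjE) auto
    have "g p \<in> W A m n" if "p \<in> P" for p
    proof -
      have "g p \<in> W A p n" using gP(3) that S_W by blast
      moreover have "p \<le> m" using gP(2) that by auto
      ultimately show ?thesis using W_mono by blast
    qed
    then show "v \<in> W A m n" unfolding gP(4) by (rule W_sum)
  qed
qed

lemma S_span: "\<exists>g P. finite P \<and> (\<forall>i\<in>P. g i \<in> S (fst i) (snd i)) \<and> v = sum g P"
proof -
  obtain gd Q where Q: "finite Q" "\<forall>n\<in>Q. gd n \<in> deg A n" "v = sum gd Q" using deg_span by blast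
  have "\<forall>n\<in>Q. \<exists>h. \<exists>P. finite P \<and> (\<forall>p\<in>P. h p \<in> S p n) \<and> gd n = sum h P"
  proof
    fix n assume "n \<in> Q"
    then obtain p where "gd n \<in> W A p n" using Q(2) W_exh by blast
    from decomp[OF this] obtain h P where "finite P \<and> P \<subseteq> {..p} \<and> (\<forall>p\<in>P. h p \<in> S p n) \<and> gd n = sum h P"
      by blast
    then show "\<exists>h. \<exists>P. finite P \<and> (\<forall>p\<in>P. h p \<in> S p n) \<and> gd n = sum h P" by blast
  qed
  from bchoice[OF this] obtain H where "\<forall>n\<in>Q. \<exists>P. finite P \<and> (\<forall>p\<in>P. H n p \<in> S p n) \<and> gd n = sum (H n) P"
    by blast
  from bchoice[OF this] obtain PP where PP: "\<forall>n\<in>Q. finite (PP n) \<and> (\<forall>p\<in>PP n. H n p \<in> S p n) \<and> gd n = sum (H n) (PP n)"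
    by blast
  define P2 where "P2 = prod.swap ` (SIGMA n:Q. PP n)"
  define G where "G i = H (snd i) (fst i)" for i :: "int \<times> int"
  have finS: "finite (SIGMA n:Q. PP n)" using Q(1) PP by (intro finite_SigmaI) auto
  have "v = (\<Sum>n\<in>Q. sum (H n) (PP n))" unfolding Q(3) using PP by (intro sum.cong) auto
  also have "\<dots> = (\<Sum>(n, p)\<in>(SIGMA n:Q. PP n). H n p)" using Q(1) PP by (intro sum.Sigma) auto
  also have "\<dots> = sum G P2" unfolding P2_def G_def
    by (subst sum.reindex) (auto simp: case_prod_beta)
  finally have "v = sum G P2" .
  moreover have "finite P2" unfolding P2_def using finS by simp
  moreover have "\<forall>i\<in>P2. G i \<in> S (fst i) (snd i)" unfolding P2_def G_def using PP by auto
  ultimately show ?thesis by (intro exI[of _ G] exI[of _ P2] conjI)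
qed

lemma S_indep: assumes fin: "finite P" and mem: "\<forall>i\<in>P. g i \<in> S (fst i) (snd i)" and z: "sum g P = 0"
  shows "\<forall>i\<in>P. g i = 0"
proof
  fix i0 assume i0: "i0 \<in> P"
  define GG where "GG n = sum g {i \<in> P. snd i = n}" for n
  have GGd: "GG n \<in> deg A n" for n
    unfolding GG_def
  proof (rule vs.subspace_sum[OF deg_sub])
    fix i assume "i \<in> {i \<in> P. snd i = n}"
    then have "g i \<in> W A (fst i) n" using mem S_W by force
    then show "g i \<in> deg A n" using W_deg by blast
  qed
  have "sum GG (snd ` P) = sum g P" unfolding GG_def
    by (rule sum.group) (use fin in auto)
  then have "sum GG (snd ` P) = 0" using z by simp
  then have "GG (snd i0) = 0" using deg_indep[of "snd ` P" GG "snd i0"] fin GGd i0 by blast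
  define Pn where "Pn = {i \<in> P. snd i = snd i0}"
  have sPn: "sum g Pn = 0" using \<open>GG (snd i0) = 0\<close> unfolding GG_def Pn_def .
  have inj: "inj_on fst Pn" unfolding Pn_def by (auto intro!: inj_onI prod_eqI)
  have finPn: "finite Pn" unfolding Pn_def using fin by simp
  have "sum (\<lambda>p. g (p, snd i0)) (fst ` Pn) = sum ((\<lambda>p. g (p, snd i0)) \<circ> fst) Pn"
    by (rule sum.reindex[OF inj])
  also have "\<dots> = sum g Pn" by (rule sum.cong) (auto simp: Pn_def)
  finally have s2: "sum (\<lambda>p. g (p, snd i0)) (fst ` Pn) = 0" using sPn by simp
  have m2: "\<forall>p\<in>fst ` Pn. g (p, snd i0) \<in> S p (snd i0)"
  proof
    fix p assume "p \<in> fst ` Pn"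
    then obtain i where "i \<in> Pn" "p = fst i" by blast
    then have "i = (p, snd i0)" "i \<in> P" unfolding Pn_def by (auto intro: prod_eqI)
    then show "g (p, snd i0) \<in> S p (snd i0)" using mem by force
  qed
  have "fst i0 \<in> fst ` Pn" using i0 unfolding Pn_def by auto
  then have "g (fst i0, snd i0) = 0" using indep_deg[OF _ m2 s2] finPn by blast
  then show "g i0 = 0" by simp
qed

lemma r_split: "r_splitting A r S"
  unfolding r_splitting_def
proof (intro conjI allI impI)
  show "vs.subspace (S p n)" for p n by (rule S_sub)
  show "\<exists>g P. finite P \<and> (\<forall>i\<in>P. g i \<in> S (fst i) (snd i)) \<and> v = sum g P" for v by (rule S_span)
  show "\<forall>i\<in>P. g i = 0" if "finite P \<and> (\<forall>i\<in>P. g i \<in> S (fst i) (snd i)) \<and> sum g P = 0" for g P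
    using S_indep that by blast
  show "dif A ` S p n \<subseteq> S (p - r) (n + 1)" for p n by (rule S_dif)
  show "mul A a b \<in> S (p + p') (n + n')" if "a \<in> S p n" "b \<in> S p' n'" for p n p' n' a b
    using S_mul that by blast
  show "W A m n = {sum g P |g P. finite P \<and> P \<subseteq> {..m} \<and> (\<forall>p\<in>P. g p \<in> S p n)}" for m n
    by (rule S_W_eq)
qed

end



locale spl = pf A r for A :: "('k::field, 'v::ab_group_add) fdga" and r +
  fixes S :: "int \<Rightarrow> int \<Rightarrow> 'v set"
  assumes rs: "r_splitting A r S"
begin

lemma Ssub_all: "\<forall>p n. vs.subspace (S p n)" using rs unfolding r_splitting_def by (elim conjE) assumption
lemma Sspan_all: "\<forall>v. \<exists>g P. finite P \<and> (\<forall>i\<in>P. g i \<in> S (fst i) (snd i)) \<and> v = sum g P"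
  using rs unfolding r_splitting_def by (elim conjE) assumption
lemma Sindep_all: "\<forall>g P. finite P \<and> (\<forall>i\<in>P. g i \<in> S (fst i) (snd i)) \<and> sum g P = 0 \<longrightarrow> (\<forall>i\<in>P. g i = 0)"
  using rs unfolding r_splitting_def by (elim conjE) assumption
lemma Sdif_all: "\<forall>p n. dif A ` S p n \<subseteq> S (p - r) (n + 1)"
  using rs unfolding r_splitting_def by (elim conjE) assumption
lemma Smul_all: "\<forall>p n p' n' a b. a \<in> S p n \<longrightarrow> b \<in> S p' n' \<longrightarrow> mul A a b \<in> S (p + p') (n + n')"
  using rs unfolding r_splitting_def by (elim conjE) assumption
lemma SW_all: "\<forall>m n. W A m n = {sum g P | g P. finite P \<and> P \<subseteq> {..m} \<and> (\<forall>p\<in>P. g p \<in> S p n)}"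
  using rs unfolding r_splitting_def by (elim conjE) assumption

lemma Ssub: "vs.subspace (S p n)" using Ssub_all by blast
lemma Sspan: "\<exists>g P. finite P \<and> (\<forall>i\<in>P. g i \<in> S (fst i) (snd i)) \<and> v = sum g P" using Sspan_all by blast
lemma Sindep: "finite P \<Longrightarrow> (\<forall>i\<in>P. g i \<in> S (fst i) (snd i)) \<Longrightarrow> sum g P = 0 \<Longrightarrow> i \<in> P \<Longrightarrow> g i = 0"
  using Sindep_all by blast
lemma Sdif: "s \<in> S p n \<Longrightarrow> dif A s \<in> S (p - r) (n + 1)" using Sdif_all by blast
lemma Smul: "a \<in> S p n \<Longrightarrow> b \<in> S p' n' \<Longrightarrow> mul A a b \<in> S (p + p') (n + n')" using Smul_all by blast
lemma SW: "W A m n = {sum g P | g P. finite P \<and> P \<subseteq> {..m} \<and> (\<forall>p\<in>P. g p \<in> S p n)}" using SW_all by blast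

lemma S0: "0 \<in> S p n" using vs.subspace_0[OF Ssub] .
lemma Sadd: "a \<in> S p n \<Longrightarrow> b \<in> S p n \<Longrightarrow> a + b \<in> S p n" using vs.subspace_add[OF Ssub] .
lemma Sdiff: "a \<in> S p n \<Longrightarrow> b \<in> S p n \<Longrightarrow> a - b \<in> S p n" using vs.subspace_diff[OF Ssub] .
lemma Sneg: "a \<in> S p n \<Longrightarrow> - a \<in> S p n" using vs.subspace_neg[OF Ssub] .
lemma Sscale: "a \<in> S p n \<Longrightarrow> smult A c a \<in> S p n" using vs.subspace_scale[OF Ssub] .

lemma W_elim: assumes "w \<in> W A m n"
  obtains g P where "finite P" "P \<subseteq> {..m}" "\<forall>p\<in>P. g p \<in> S p n" "w = sum g P"
proof -
  have "w \<in> {sum g P | g P. finite P \<and> P \<subseteq> {..m} \<and> (\<forall>p\<in>P. g p \<in> S p n)}" using assms SW by blast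
  then show ?thesis unfolding mem_Collect_eq using that by (elim exE conjE) simp
qed

lemma W_intro: "finite P \<Longrightarrow> P \<subseteq> {..m} \<Longrightarrow> \<forall>p\<in>P. g p \<in> S p n \<Longrightarrow> sum g P \<in> W A m n"
proof -
  assume "finite P" "P \<subseteq> {..m}" "\<forall>p\<in>P. g p \<in> S p n"
  then have "sum g P \<in> {sum g P | g P. finite P \<and> P \<subseteq> {..m} \<and> (\<forall>p\<in>P. g p \<in> S p n)}" by blast
  then show ?thesis using SW by blast
qed

lemma S_W: "S p n \<subseteq> W A p n"
proof
  fix s assume "s \<in> S p n"
  then have "sum (\<lambda>_. s) {p} \<in> W A p n" by (intro W_intro) auto
  then show "s \<in> W A p n" by simp
qed

lemma split: assumes "z \<in> W A p n" obtains s where "s \<in> S p n" "z - s \<in> W A (p - 1) n"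
proof -
  obtain g P where gP: "finite P" "P \<subseteq> {..p}" "\<forall>q\<in>P. g q \<in> S q n" "z = sum g P"
    using assms by (rule W_elim)
  define s where "s = (if p \<in> P then g p else 0)"
  have sS: "s \<in> S p n" unfolding s_def using gP(3) S0 by auto
  have "z - s = sum g (P - {p})" unfolding gP(4) s_def using gP(1) by (simp add: sum_diff1)
  also have "\<dots> \<in> W A (p - 1) n" using gP by (intro W_intro) auto
  finally show ?thesis using that sS by blast
qed

lemma uniq: assumes s1: "s1 \<in> S p n" and s2: "s2 \<in> S p n" and d: "s1 - s2 \<in> W A (p - 1) n"
  shows "s1 = s2"
proof -
  obtain g P where gP: "finite P" "P \<subseteq> {..p - 1}" "\<forall>q\<in>P. g q \<in> S q n" "s1 - s2 = sum g P"
    using d by (rule W_elim)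
  have pP: "p \<notin> P" using gP(2) by auto
  define h where "h i = (if i = (p, n) then s1 - s2 else - g (fst i))" for i
  define Q where "Q = insert (p, n) ((\<lambda>q. (q, n)) ` P)"
  have inj: "inj_on (\<lambda>q. (q, n)) P" by (auto intro: inj_onI)
  have nin: "(p, n) \<notin> (\<lambda>q. (q, n)) ` P" using pP by auto
  have "sum h Q = (s1 - s2) + sum h ((\<lambda>q. (q, n)) ` P)"
    unfolding Q_def using gP(1) nin by (simp add: h_def)
  also have "sum h ((\<lambda>q. (q, n)) ` P) = sum (h \<circ> (\<lambda>q. (q, n))) P" by (rule sum.reindex[OF inj])
  also have "\<dots> = sum (\<lambda>q. - g q) P" using pP by (intro sum.cong) (auto simp: h_def)
  also have "\<dots> = - sum g P" by (simp add: sum_negf)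
  finally have "sum h Q = 0" using gP(4) by simp
  moreover have "\<forall>i\<in>Q. h i \<in> S (fst i) (snd i)"
    unfolding Q_def h_def using Sdiff[OF s1 s2] gP(3) Sneg by auto
  moreover have "finite Q" unfolding Q_def using gP(1) by simp
  ultimately have "h (p, n) = 0" using Sindep[of Q h "(p, n)"] unfolding Q_def by blast
  then show ?thesis by (simp add: h_def)
qed

lemma cls_inj_S: "s1 \<in> S p n \<Longrightarrow> s2 \<in> S p n \<Longrightarrow> cls A r p n s1 = cls A r p n s2 \<Longrightarrow> s1 = s2"
  using uniq cls_eq_iff by blast

lemma Ep_S: assumes "X \<in> Ep A r p n" obtains s where "s \<in> S p n" "X = cls A r p n s"
proof -
  obtain z where z: "z \<in> W A p n" "X = cls A r p n z" using Ep_iff[THEN iffD1, OF assms] by blast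
  obtain s where s: "s \<in> S p n" "z - s \<in> W A (p - 1) n" using z(1) by (rule split)
  have "X = cls A r p n s" using z(2) s(2) cls_eq_iff by simp
  then show ?thesis using that s(1) by blast
qed

lemma cls_S_Ep: "s \<in> S p n \<Longrightarrow> cls A r p n s \<in> Ep A r p n"
  using S_W cls_in_Ep by blast

definition decomp_of :: "'v \<Rightarrow> ((int \<times> int \<Rightarrow> 'v) \<times> (int \<times> int) set)" where
  "decomp_of v = (SOME x. case x of (g, P) \<Rightarrow> finite P \<and> (\<forall>i\<in>P. g i \<in> S (fst i) (snd i)) \<and> v = sum g P)"

lemma decomp_of: "finite (snd (decomp_of v)) \<and> (\<forall>i\<in>snd (decomp_of v). fst (decomp_of v) i \<in> S (fst i) (snd i))
   \<and> v = sum (fst (decomp_of v)) (snd (decomp_of v))"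
proof -
  obtain g P where H: "finite P \<and> (\<forall>i\<in>P. g i \<in> S (fst i) (snd i)) \<and> v = sum g P" using Sspan by blast
  have "(\<lambda>x. case x of (g, P) \<Rightarrow> finite P \<and> (\<forall>i\<in>P. g i \<in> S (fst i) (snd i)) \<and> v = sum g P) (g, P)"
    using H by simp
  then have "(\<lambda>x. case x of (g, P) \<Rightarrow> finite P \<and> (\<forall>i\<in>P. g i \<in> S (fst i) (snd i)) \<and> v = sum g P) (decomp_of v)"
    unfolding decomp_of_def by (rule someI)
  then show ?thesis by (simp add: case_prod_beta)
qed

definition Lift :: "(int \<Rightarrow> int \<Rightarrow> 'v \<Rightarrow> 'b::ab_group_add) \<Rightarrow> 'v \<Rightarrow> 'b" where
  "Lift \<phi> v = (\<Sum>i\<in>snd (decomp_of v). \<phi> (fst i) (snd i) (fst (decomp_of v) i))"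

lemma pad_sum: assumes "finite R" "P \<subseteq> R" "\<And>i. \<phi> i 0 = 0"
  shows "(\<Sum>i\<in>R. \<phi> i (if i \<in> P then g i else 0)) = (\<Sum>i\<in>P. \<phi> i (g i))"
  by (rule sum.mono_neutral_cong_right) (use assms in auto)

lemma same_decomp:
  assumes P: "finite P" "\<forall>i\<in>P. g i \<in> S (fst i) (snd i)"
    and Q: "finite Q" "\<forall>i\<in>Q. h i \<in> S (fst i) (snd i)"
    and e: "sum g P = sum h Q"
    and i: "i \<in> P \<union> Q"
  shows "(if i \<in> P then g i else 0) = (if i \<in> Q then h i else 0)"
proof -
  let ?R = "P \<union> Q"
  define g' where "g' j = (if j \<in> P then g j else 0)" for j
  define h' where "h' j = (if j \<in> Q then h j else 0)" for j
  have fR: "finite ?R" using P Q by simp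
  have "sum g' ?R = sum g P" unfolding g'_def using pad_sum[OF fR, of P "\<lambda>_ x. x" g] by simp
  moreover have "sum h' ?R = sum h Q" unfolding h'_def using pad_sum[OF fR, of Q "\<lambda>_ x. x" h] by simp
  ultimately have "sum (\<lambda>j. g' j - h' j) ?R = 0" using e by (simp add: sum_subtractf)
  moreover have "\<forall>j\<in>?R. g' j - h' j \<in> S (fst j) (snd j)"
    unfolding g'_def h'_def using P(2) Q(2) S0 Sdiff Sneg by auto
  ultimately have "g' i - h' i = 0" using Sindep[OF fR, of "\<lambda>j. g' j - h' j" i] i by blast
  then show ?thesis unfolding g'_def h'_def by simp
qed

lemma Lift_eq: assumes z: "\<And>p n. \<phi> p n 0 = 0" and P: "finite P" "\<forall>i\<in>P. g i \<in> S (fst i) (snd i)"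
  shows "Lift \<phi> (sum g P) = (\<Sum>i\<in>P. \<phi> (fst i) (snd i) (g i))"
proof -
  define g0 where "g0 = fst (decomp_of (sum g P))"
  define P0 where "P0 = snd (decomp_of (sum g P))"
  have D: "finite P0" "\<forall>i\<in>P0. g0 i \<in> S (fst i) (snd i)" "sum g P = sum g0 P0"
    using decomp_of[of "sum g P"] unfolding g0_def P0_def by auto
  let ?R = "P0 \<union> P"
  have fR: "finite ?R" using D P by simp
  have z': "\<And>i. \<phi> (fst i) (snd i) 0 = 0" using z by blast
  have "Lift \<phi> (sum g P) = (\<Sum>i\<in>P0. \<phi> (fst i) (snd i) (g0 i))" unfolding Lift_def g0_def P0_def ..
  also have "\<dots> = (\<Sum>i\<in>?R. \<phi> (fst i) (snd i) (if i \<in> P0 then g0 i else 0))"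
    by (rule pad_sum[symmetric]) (use fR z' in auto)
  also have "\<dots> = (\<Sum>i\<in>?R. \<phi> (fst i) (snd i) (if i \<in> P then g i else 0))"
  proof (rule sum.cong[OF refl])
    fix i assume "i \<in> ?R"
    then have "(if i \<in> P0 then g0 i else 0) = (if i \<in> P then g i else 0)"
      using same_decomp[OF D(1,2) P D(3)[symmetric]] by blast
    then show "\<phi> (fst i) (snd i) (if i \<in> P0 then g0 i else 0) = \<phi> (fst i) (snd i) (if i \<in> P then g i else 0)"
      by simp
  qed
  also have "\<dots> = (\<Sum>i\<in>P. \<phi> (fst i) (snd i) (g i))"
    by (rule pad_sum) (use fR z' in auto)
  finally show ?thesis .
qed

end




locale liftG = spl A r S for A :: "('k::field, 'v::ab_group_add) fdga" and r and S +
  fixes G :: "int \<Rightarrow> int \<Rightarrow> 'v set \<Rightarrow> 'v set"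
  assumes GA: "Er_aut A r G"
begin

lemma G_bij_all: "\<forall>p n. bij_betw (G p n) (Ep A r p n) (Ep A r p n)" using GA unfolding Er_aut_def by (elim conjE) assumption
lemma G_add_all: "\<forall>p n. \<forall>X\<in>Ep A r p n. \<forall>Y\<in>Ep A r p n. G p n (E_add X Y) = E_add (G p n X) (G p n Y)"
  using GA unfolding Er_aut_def by (elim conjE) assumption
lemma G_smult_all: "\<forall>p n c. \<forall>X\<in>Ep A r p n. G p n (E_smult A r p n c X) = E_smult A r p n c (G p n X)"
  using GA unfolding Er_aut_def by (elim conjE) assumption
lemma G_mul_all: "\<forall>p n p' n'. \<forall>X\<in>Ep A r p n. \<forall>Y\<in>Ep A r p' n'.
        G (p + p') (n + n') (E_mul A r (p + p') (n + n') X Y)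
          = E_mul A r (p + p') (n + n') (G p n X) (G p' n' Y)"
  using GA unfolding Er_aut_def by (elim conjE) assumption
lemma G_d_all: "\<forall>p n. \<forall>X\<in>Ep A r p n. G (p - r) (n + 1) (E_d A r p n X) = E_d A r p n (G p n X)"
  using GA unfolding Er_aut_def by (elim conjE) assumption

lemma G_bij: "bij_betw (G p n) (Ep A r p n) (Ep A r p n)" using G_bij_all by blast
lemma G_add: "X \<in> Ep A r p n \<Longrightarrow> Y \<in> Ep A r p n \<Longrightarrow> G p n (E_add X Y) = E_add (G p n X) (G p n Y)"
  using G_add_all by blast
lemma G_smult: "X \<in> Ep A r p n \<Longrightarrow> G p n (E_smult A r p n c X) = E_smult A r p n c (G p n X)"
  using G_smult_all by blast
lemma G_mul: "X \<in> Ep A r p n \<Longrightarrow> Y \<in> Ep A r p' n' \<Longrightarrow> G (p + p') (n + n') (E_mul A r (p + p') (n + n') X Y)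
          = E_mul A r (p + p') (n + n') (G p n X) (G p' n' Y)"
  using G_mul_all by blast
lemma G_d: "X \<in> Ep A r p n \<Longrightarrow> G (p - r) (n + 1) (E_d A r p n X) = E_d A r p n (G p n X)"
  using G_d_all by blast
lemma G_Ep: "X \<in> Ep A r p n \<Longrightarrow> G p n X \<in> Ep A r p n"
  using G_bij bij_betwE by blast

definition sig where "sig p n s = (THE t. t \<in> S p n \<and> cls A r p n t = G p n (cls A r p n s))"

lemma sig_ex: assumes "s \<in> S p n" shows "\<exists>t. t \<in> S p n \<and> cls A r p n t = G p n (cls A r p n s)"
proof -
  have "G p n (cls A r p n s) \<in> Ep A r p n" using G_Ep cls_S_Ep assms by blast
  then obtain t where t: "t \<in> S p n" "G p n (cls A r p n s) = cls A r p n t" by (rule Ep_S)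
  show ?thesis by (rule exI[of _ t]) (simp add: t)
qed

lemma sig: assumes "s \<in> S p n" shows "sig p n s \<in> S p n" "cls A r p n (sig p n s) = G p n (cls A r p n s)"
proof -
  have "\<exists>!t. t \<in> S p n \<and> cls A r p n t = G p n (cls A r p n s)"
  proof (rule ex_ex1I)
    show "\<exists>t. t \<in> S p n \<and> cls A r p n t = G p n (cls A r p n s)" by (rule sig_ex[OF assms])
    fix x y assume "x \<in> S p n \<and> cls A r p n x = G p n (cls A r p n s)"
      "y \<in> S p n \<and> cls A r p n y = G p n (cls A r p n s)"
    then show "x = y" using cls_inj_S[of x p n y] by simp
  qed
  then have "sig p n s \<in> S p n \<and> cls A r p n (sig p n s) = G p n (cls A r p n s)"
    unfolding sig_def by (rule theI')
  then show "sig p n s \<in> S p n" "cls A r p n (sig p n s) = G p n (cls A r p n s)" by auto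
qed

lemma sig_char: assumes "s \<in> S p n" "t \<in> S p n" "cls A r p n t = G p n (cls A r p n s)" shows "sig p n s = t"
  using cls_inj_S[OF sig(1)[OF assms(1)] assms(2)] sig(2)[OF assms(1)] assms(3) by simp

lemma sig_add: assumes a: "a \<in> S p n" and b: "b \<in> S p n" shows "sig p n (a + b) = sig p n a + sig p n b"
proof (rule sig_char)
  show "a + b \<in> S p n" using Sadd a b .
  show "sig p n a + sig p n b \<in> S p n" using Sadd sig(1) a b by blast
  have "cls A r p n (sig p n a + sig p n b) = E_add (cls A r p n (sig p n a)) (cls A r p n (sig p n b))"
    by (rule E_add_cls[symmetric])
  also have "\<dots> = E_add (G p n (cls A r p n a)) (G p n (cls A r p n b))" using sig(2) a b by simp
  also have "\<dots> = G p n (E_add (cls A r p n a) (cls A r p n b))" using G_add cls_S_Ep a b by simp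
  also have "\<dots> = G p n (cls A r p n (a + b))" by (simp add: E_add_cls)
  finally show "cls A r p n (sig p n a + sig p n b) = G p n (cls A r p n (a + b))" .
qed

lemma sig_0: "sig p n 0 = 0"
  using sig_add[OF S0 S0, of p n] by simp

lemma sig_scale: assumes a: "a \<in> S p n" shows "sig p n (smult A c a) = smult A c (sig p n a)"
proof (rule sig_char)
  show "smult A c a \<in> S p n" using Sscale a .
  show "smult A c (sig p n a) \<in> S p n" using Sscale sig(1) a by blast
  have "cls A r p n (smult A c (sig p n a)) = E_smult A r p n c (cls A r p n (sig p n a))"
    by (rule E_smult_cls[symmetric])
  also have "\<dots> = E_smult A r p n c (G p n (cls A r p n a))" using sig(2) a by simp
  also have "\<dots> = G p n (E_smult A r p n c (cls A r p n a))" using G_smult cls_S_Ep a by simp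
  also have "\<dots> = G p n (cls A r p n (smult A c a))" by (simp add: E_smult_cls)
  finally show "cls A r p n (smult A c (sig p n a)) = G p n (cls A r p n (smult A c a))" .
qed

lemma sig_mul: assumes a: "a \<in> S p n" and b: "b \<in> S p' n'"
  shows "sig (p + p') (n + n') (mul A a b) = mul A (sig p n a) (sig p' n' b)"
proof (rule sig_char)
  show "mul A a b \<in> S (p + p') (n + n')" using Smul a b .
  show "mul A (sig p n a) (sig p' n' b) \<in> S (p + p') (n + n')" using Smul sig(1) a b by blast
  have sa: "sig p n a \<in> W A p n" and sb: "sig p' n' b \<in> W A p' n'" using sig(1) a b S_W by blast+
  have aW: "a \<in> W A p n" and bW: "b \<in> W A p' n'" using a b S_W by blast+
  have "cls A r (p + p') (n + n') (mul A (sig p n a) (sig p' n' b))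
      = E_mul A r (p + p') (n + n') (cls A r p n (sig p n a)) (cls A r p' n' (sig p' n' b))"
    by (rule E_mul_cls[OF sa sb, symmetric])
  also have "\<dots> = E_mul A r (p + p') (n + n') (G p n (cls A r p n a)) (G p' n' (cls A r p' n' b))"
    using sig(2) a b by simp
  also have "\<dots> = G (p + p') (n + n') (E_mul A r (p + p') (n + n') (cls A r p n a) (cls A r p' n' b))"
    using G_mul cls_S_Ep a b by simp
  also have "\<dots> = G (p + p') (n + n') (cls A r (p + p') (n + n') (mul A a b))" using E_mul_cls[OF aW bW] by simp
  finally show "cls A r (p + p') (n + n') (mul A (sig p n a) (sig p' n' b))
      = G (p + p') (n + n') (cls A r (p + p') (n + n') (mul A a b))" .
qed

lemma sig_dif: assumes a: "a \<in> S p n"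
  shows "sig (p - r) (n + 1) (dif A a) = dif A (sig p n a)"
proof (rule sig_char)
  show "dif A a \<in> S (p - r) (n + 1)" using Sdif a .
  show "dif A (sig p n a) \<in> S (p - r) (n + 1)" using Sdif sig(1) a by blast
  have sa: "sig p n a \<in> W A p n" using sig(1) a S_W by blast
  have aW: "a \<in> W A p n" using a S_W by blast
  have "cls A r (p - r) (n + 1) (dif A (sig p n a)) = E_d A r p n (cls A r p n (sig p n a))"
    by (rule E_d_cls[OF sa, symmetric])
  also have "\<dots> = E_d A r p n (G p n (cls A r p n a))" using sig(2) a by simp
  also have "\<dots> = G (p - r) (n + 1) (E_d A r p n (cls A r p n a))" using G_d cls_S_Ep a by simp
  also have "\<dots> = G (p - r) (n + 1) (cls A r (p - r) (n + 1) (dif A a))" using E_d_cls[OF aW] by simp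
  finally show "cls A r (p - r) (n + 1) (dif A (sig p n a)) = G (p - r) (n + 1) (cls A r (p - r) (n + 1) (dif A a))" .
qed

lemma sig_bij: "bij_betw (sig p n) (S p n) (S p n)"
proof -
  have inj: "inj_on (sig p n) (S p n)"
  proof (rule inj_onI)
    fix a b assume a: "a \<in> S p n" and b: "b \<in> S p n" and e: "sig p n a = sig p n b"
    have "G p n (cls A r p n a) = G p n (cls A r p n b)" using sig(2)[OF a] sig(2)[OF b] e by simp
    then have "cls A r p n a = cls A r p n b"
      by (rule inj_onD[OF bij_betw_imp_inj_on[OF G_bij] _ cls_S_Ep[OF a] cls_S_Ep[OF b]])
    then show "a = b" using cls_inj_S a b by blast
  qed
  have surj: "sig p n ` S p n = S p n"
  proof
    show "sig p n ` S p n \<subseteq> S p n" using sig(1) by blast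
    show "S p n \<subseteq> sig p n ` S p n"
    proof
      fix t assume t: "t \<in> S p n"
      have "cls A r p n t \<in> G p n ` Ep A r p n"
        unfolding bij_betw_imp_surj_on[OF G_bij] by (rule cls_S_Ep[OF t])
      then obtain Y where Y: "Y \<in> Ep A r p n" "cls A r p n t = G p n Y" by blast
      obtain s where s: "s \<in> S p n" "Y = cls A r p n s" using Y(1) by (rule Ep_S)
      have "sig p n s = t" using sig_char[OF s(1) t] Y(2) s(2) by simp
      then show "t \<in> sig p n ` S p n" using s(1) by blast
    qed
  qed
  show ?thesis unfolding bij_betw_def using inj surj by (rule conjI)
qed

end



context liftG begin

definition FF where "FF = Lift sig"
definition tau where "tau p n = the_inv_into (S p n) (sig p n)"

lemma tau: assumes "t \<in> S p n" shows "tau p n t \<in> S p n" "sig p n (tau p n t) = t"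
proof -
  show "tau p n t \<in> S p n" unfolding tau_def
    using bij_betw_the_inv_into[OF sig_bij] assms bij_betwE by blast
  show "sig p n (tau p n t) = t" unfolding tau_def
    by (rule f_the_inv_into_f_bij_betw[OF sig_bij]) (rule assms)
qed

lemma sig_zero_iff: assumes s: "s \<in> S p n" and z: "sig p n s = 0" shows "s = 0"
proof -
  have "sig p n s = sig p n 0" using z sig_0 by simp
  then show ?thesis by (rule inj_onD[OF bij_betw_imp_inj_on[OF sig_bij] _ s S0])
qed

lemma mul_sums: "mul A (sum g P) (sum h Q) = (\<Sum>i\<in>P. \<Sum>j\<in>Q. mul A (g i) (h j))"
  by (subst mul_sum_left) (simp add: mul_sum_right)

lemma FF_sum: "finite P \<Longrightarrow> \<forall>i\<in>P. g i \<in> S (fst i) (snd i) \<Longrightarrow> FF (sum g P) = (\<Sum>i\<in>P. sig (fst i) (snd i) (g i))"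
  unfolding FF_def by (rule Lift_eq) (simp_all add: sig_0)

lemma FF_S: assumes "s \<in> S p n" shows "FF s = sig p n s"
proof -
  have "FF (sum (\<lambda>_. s) {(p, n)}) = (\<Sum>i\<in>{(p, n)}. sig (fst i) (snd i) s)"
    by (rule FF_sum) (use assms in auto)
  then show ?thesis by simp
qed

lemma FFtau: "t \<in> S p n \<Longrightarrow> FF (tau p n t) = t"
  using FF_S[OF tau(1)] tau(2) by simp

lemma decompE: obtains g P where "finite P" "\<forall>i\<in>P. g i \<in> S (fst i) (snd i)" "v = sum g P"
  using Sspan[of v] by blast

lemma FF_add: "FF (u + v) = FF u + FF v"
proof -
  obtain g P where P: "finite P" "\<forall>i\<in>P. g i \<in> S (fst i) (snd i)" "u = sum g P" by (rule decompE)
  obtain h Q where Q: "finite Q" "\<forall>i\<in>Q. h i \<in> S (fst i) (snd i)" "v = sum h Q" by (rule decompE)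
  define R where "R = P \<union> Q"
  define g' where "g' i = (if i \<in> P then g i else 0)" for i
  define h' where "h' i = (if i \<in> Q then h i else 0)" for i
  have fR: "finite R" unfolding R_def using P Q by simp
  have u: "u = sum g' R" unfolding g'_def P(3) using pad_sum[OF fR, of P "\<lambda>_ x. x" g] R_def by simp
  have v: "v = sum h' R" unfolding h'_def Q(3) using pad_sum[OF fR, of Q "\<lambda>_ x. x" h] R_def by simp
  have g'S: "\<forall>i\<in>R. g' i \<in> S (fst i) (snd i)" unfolding g'_def using P(2) S0 by auto
  have h'S: "\<forall>i\<in>R. h' i \<in> S (fst i) (snd i)" unfolding h'_def using Q(2) S0 by auto
  have ghS: "\<forall>i\<in>R. g' i + h' i \<in> S (fst i) (snd i)" using g'S h'S Sadd by blast
  have "u + v = sum (\<lambda>i. g' i + h' i) R" unfolding u v by (simp add: sum.distrib)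
  then have "FF (u + v) = (\<Sum>i\<in>R. sig (fst i) (snd i) (g' i + h' i))" using FF_sum[OF fR ghS] by simp
  also have "\<dots> = (\<Sum>i\<in>R. sig (fst i) (snd i) (g' i) + sig (fst i) (snd i) (h' i))"
    using g'S h'S by (intro sum.cong) (auto simp: sig_add)
  also have "\<dots> = FF u + FF v" unfolding u v FF_sum[OF fR g'S] FF_sum[OF fR h'S] by (simp add: sum.distrib)
  finally show ?thesis .
qed

sublocale FFadd: additive FF by standard (rule FF_add)

lemma FF_scale: "FF (smult A c u) = smult A c (FF u)"
proof -
  obtain g P where P: "finite P" "\<forall>i\<in>P. g i \<in> S (fst i) (snd i)" "u = sum g P" by (rule decompE)
  have S': "\<forall>i\<in>P. smult A c (g i) \<in> S (fst i) (snd i)" using P(2) Sscale by blast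
  have "FF (smult A c u) = FF (\<Sum>i\<in>P. smult A c (g i))" unfolding P(3) by (simp add: vs.scale_sum_right)
  also have "\<dots> = (\<Sum>i\<in>P. sig (fst i) (snd i) (smult A c (g i)))" by (rule FF_sum[OF P(1) S'])
  also have "\<dots> = (\<Sum>i\<in>P. smult A c (sig (fst i) (snd i) (g i)))" using P(2) by (intro sum.cong) (auto simp: sig_scale)
  also have "\<dots> = smult A c (FF u)" unfolding P(3) FF_sum[OF P(1) P(2)] by (simp add: vs.scale_sum_right)
  finally show ?thesis .
qed

lemma FF_mul: "FF (mul A u v) = mul A (FF u) (FF v)"
proof -
  obtain g P where P: "finite P" "\<forall>i\<in>P. g i \<in> S (fst i) (snd i)" "u = sum g P" by (rule decompE)
  obtain h Q where Q: "finite Q" "\<forall>i\<in>Q. h i \<in> S (fst i) (snd i)" "v = sum h Q" by (rule decompE)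
  have "FF (mul A u v) = FF (\<Sum>i\<in>P. \<Sum>j\<in>Q. mul A (g i) (h j))"
    unfolding P(3) Q(3) mul_sums ..
  also have "\<dots> = (\<Sum>i\<in>P. \<Sum>j\<in>Q. FF (mul A (g i) (h j)))" by (simp add: FFadd.sum)
  also have "\<dots> = (\<Sum>i\<in>P. \<Sum>j\<in>Q. mul A (sig (fst i) (snd i) (g i)) (sig (fst j) (snd j) (h j)))"
  proof (intro sum.cong refl)
    fix i j assume i: "i \<in> P" and j: "j \<in> Q"
    have gi: "g i \<in> S (fst i) (snd i)" and hj: "h j \<in> S (fst j) (snd j)" using P(2) Q(2) i j by auto
    show "FF (mul A (g i) (h j)) = mul A (sig (fst i) (snd i) (g i)) (sig (fst j) (snd j) (h j))"
      using FF_S[OF Smul[OF gi hj]] sig_mul[OF gi hj] by simp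
  qed
  also have "\<dots> = mul A (FF u) (FF v)"
    unfolding P(3) Q(3) FF_sum[OF P(1) P(2)] FF_sum[OF Q(1) Q(2)] mul_sums ..
  finally show ?thesis .
qed

lemma FF_dif: "FF (dif A u) = dif A (FF u)"
proof -
  obtain g P where P: "finite P" "\<forall>i\<in>P. g i \<in> S (fst i) (snd i)" "u = sum g P" by (rule decompE)
  have "FF (dif A u) = (\<Sum>i\<in>P. FF (dif A (g i)))" unfolding P(3) by (simp add: dif_add.sum FFadd.sum)
  also have "\<dots> = (\<Sum>i\<in>P. dif A (sig (fst i) (snd i) (g i)))"
  proof (rule sum.cong[OF refl])
    fix i assume i: "i \<in> P"
    have gi: "g i \<in> S (fst i) (snd i)" using P(2) i by auto
    show "FF (dif A (g i)) = dif A (sig (fst i) (snd i) (g i))"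
      using FF_S[OF Sdif[OF gi]] sig_dif[OF gi] by simp
  qed
  also have "\<dots> = dif A (FF u)" unfolding P(3) FF_sum[OF P(1) P(2)] by (simp add: dif_add.sum)
  finally show ?thesis .
qed

lemma FF_W: assumes "v \<in> W A p n" shows "FF v \<in> W A p n"
proof -
  obtain g P where P: "finite P" "P \<subseteq> {..p}" "\<forall>q\<in>P. g q \<in> S q n" "v = sum g P"
    using assms by (rule W_elim)
  have "FF v = (\<Sum>q\<in>P. sig q n (g q))" unfolding P(4) FFadd.sum using P(3) by (intro sum.cong) (auto simp: FF_S)
  also have "\<dots> \<in> W A p n" using P sig(1) by (intro W_intro) auto
  finally show ?thesis .
qed

lemma FF_W_surj: assumes "w \<in> W A p n" shows "w \<in> FF ` W A p n"
proof -
  obtain g P where P: "finite P" "P \<subseteq> {..p}" "\<forall>q\<in>P. g q \<in> S q n" "w = sum g P"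
    using assms by (rule W_elim)
  define v where "v = (\<Sum>q\<in>P. tau q n (g q))"
  have "v \<in> W A p n" unfolding v_def using P tau(1) by (intro W_intro) auto
  moreover have "FF v = w" unfolding v_def FFadd.sum P(4) using P(3)
    by (intro sum.cong) (auto simp: FFtau)
  ultimately show ?thesis by blast
qed

lemma FF_zero: assumes "FF u = 0" shows "u = 0"
proof -
  obtain g P where P: "finite P" "\<forall>i\<in>P. g i \<in> S (fst i) (snd i)" "u = sum g P" by (rule decompE)
  have "(\<Sum>i\<in>P. sig (fst i) (snd i) (g i)) = 0" using assms FF_sum[OF P(1) P(2)] P(3) by simp
  moreover have "\<forall>i\<in>P. sig (fst i) (snd i) (g i) \<in> S (fst i) (snd i)" using P(2) sig(1) by blast
  ultimately have "\<forall>i\<in>P. sig (fst i) (snd i) (g i) = 0"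
    using Sindep[OF P(1), of "\<lambda>i. sig (fst i) (snd i) (g i)"] by blast
  then have "\<forall>i\<in>P. g i = 0" using P(2) sig_zero_iff by blast
  then show ?thesis using P(3) by simp
qed

lemma FF_surj: "\<exists>v. FF v = w"
proof -
  obtain g P where P: "finite P" "\<forall>i\<in>P. g i \<in> S (fst i) (snd i)" "w = sum g P" by (rule decompE)
  have "FF (\<Sum>i\<in>P. tau (fst i) (snd i) (g i)) = w"
    unfolding FFadd.sum P(3) using P(2) by (intro sum.cong) (auto simp: FFtau)
  then show ?thesis by blast
qed

lemma FF_bij: "bij FF"
proof (rule bijI)
  show "inj FF"
  proof (rule injI)
    fix x y assume "FF x = FF y"
    then have "FF (x - y) = 0" by (simp add: FFadd.diff)
    then have "x - y = 0" by (rule FF_zero)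
    then show "x = y" by simp
  qed
  show "surj FF" using FF_surj by (metis surjI)
qed

lemma FF_one: "FF (one A) = one A"
proof -
  obtain v where v: "FF v = one A" using FF_surj by blast
  have "FF (mul A (one A) v) = mul A (FF (one A)) (FF v)" by (rule FF_mul)
  then show ?thesis using v by simp
qed

lemma FF_Weq: "FF ` W A p n = W A p n"
  using FF_W FF_W_surj by blast

lemma FF_deg: "FF ` deg A n \<subseteq> deg A n"
proof
  fix x assume "x \<in> FF ` deg A n"
  then obtain v where v: "v \<in> deg A n" "x = FF v" by blast
  obtain p where "v \<in> W A p n" using W_exh[OF v(1)] by blast
  then have "x \<in> W A p n" using FF_W v(2) by simp
  then show "x \<in> deg A n" using W_deg by blast
qed

lemma pf_A: "pf A r" by (rule pf_axioms)

lemma FF_filaut: "fil_aut A FF"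
  unfolding fil_aut_def fdga_hom_def
  using FF_add FF_scale FF_deg FF_one FF_mul FF_dif FF_Weq FF_bij by (simp add: image_subset_iff)

lemma FF_ind: "Er_induces A r FF G"
  unfolding Er_induces_def
proof (intro allI ballI)
  fix p n X assume X: "X \<in> Ep A r p n"
  obtain s where s: "s \<in> S p n" "X = cls A r p n s" using X by (rule Ep_S)
  have "Er_map A A r FF p n X = cls A r p n (FF s)" unfolding s(2)
    by (rule Er_map_cls_gen[OF pf_A pf_A FF_add]) (simp add: FF_Weq)
  also have "\<dots> = G p n X" using FF_S[OF s(1)] sig(2)[OF s(1)] s(2) by simp
  finally show "Er_map A A r FF p n X = G p n X" .
qed

end



context pf begin

lemma gr_of_ind:
  assumes F: "fil_aut A F" and ind: "Er_induces A r F (bigrading_aut A r \<alpha>)" and z: "z \<in> W A p n"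
  shows "F z - smult A (\<alpha> powi (n * r + p)) z \<in> W A (p - 1) n"
proof -
  have hom: "fdga_hom A A F" using F unfolding fil_aut_def by (elim conjE) assumption
  have h1: "\<forall>u v. F (u + v) = F u + F v" using hom unfolding fdga_hom_def by (elim conjE) assumption
  have h5: "\<forall>p n. F ` W A p n \<subseteq> W A p n" using hom unfolding fdga_hom_def by (elim conjE) assumption
  have Fadd: "\<And>u v. F (u + v) = F u + F v" using h1 by blast
  have FW: "\<And>p n. F ` W A p n \<subseteq> W A p n" using h5 by blast
  have X: "cls A r p n z \<in> Ep A r p n" using cls_in_Ep[OF z] .
  have "Er_map A A r F p n (cls A r p n z) = bigrading_aut A r \<alpha> p n (cls A r p n z)"
    using ind X unfolding Er_induces_def by simp
  then have "cls A r p n (F z) = cls A r p n (smult A (\<alpha> powi (n * r + p)) z)"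
    unfolding Er_map_cls_gen[OF pf_axioms pf_axioms Fadd FW] bigr_cls .
  then show ?thesis using cls_eq_iff by blast
qed

lemma eig_of:
  assumes F: "fil_aut A F" and ind: "Er_induces A r F (bigrading_aut A r \<alpha>)"
    and a0: "\<alpha> \<noteq> 0" and nru: "\<forall>m::nat. 0 < m \<longrightarrow> \<alpha> ^ m \<noteq> 1"
  shows "eig A r F \<alpha>"
proof -
  have hom: "fdga_hom A A F" using F unfolding fil_aut_def by (elim conjE) assumption
  have h1: "\<forall>u v. F (u + v) = F u + F v" using hom unfolding fdga_hom_def by (elim conjE) assumption
  have h2: "\<forall>c v. F (smult A c v) = smult A c (F v)" using hom unfolding fdga_hom_def by (elim conjE) assumption
  have h3: "\<forall>u v. F (mul A u v) = mul A (F u) (F v)" using hom unfolding fdga_hom_def by (elim conjE) assumption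
  have h4: "\<forall>v. F (dif A v) = dif A (F v)" using hom unfolding fdga_hom_def by (elim conjE) assumption
  have h5: "\<forall>p n. F ` W A p n \<subseteq> W A p n" using hom unfolding fdga_hom_def by (elim conjE) assumption
  show ?thesis
  proof (rule eig.intro[OF pf_axioms], unfold_locales)
    show "F (u + v) = F u + F v" for u v using h1 by blast
    show "F (smult A c v) = smult A c (F v)" for c v using h2 by blast
    show "F (mul A u v) = mul A (F u) (F v)" for u v using h3 by blast
    show "F (dif A v) = dif A (F v)" for v using h4 by blast
    show "v \<in> W A p n \<Longrightarrow> F v \<in> W A p n" for v p n using h5 by blast
    show "z \<in> W A p n \<Longrightarrow> F z - smult A (\<alpha> powi (n * r + p)) z \<in> W A (p - 1) n" for z p n
      by (rule gr_of_ind[OF F ind])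
    show "\<alpha> \<noteq> 0" by (rule a0)
    show "\<forall>m::nat. 0 < m \<longrightarrow> \<alpha> ^ m \<noteq> 1" by (rule nru)
  qed
qed

end

context pf2 begin

lemma three_to_one:
  assumes a0: "\<alpha> \<noteq> 0" and nru: "\<forall>m::nat. 0 < m \<longrightarrow> \<alpha> ^ m \<noteq> 1"
    and W: "AutW A B f FA FB"
    and iA: "Er_induces A r FA (bigrading_aut A r \<alpha>)" and iB: "Er_induces B r FB (bigrading_aut B r \<alpha>)"
  shows "admits_r_splitting A B r f"
proof -
  have fA: "fil_aut A FA" using W unfolding AutW_def by (elim conjE) assumption
  have fB: "fil_aut B FB" using W unfolding AutW_def by (elim conjE) assumption
  have comm: "\<forall>a. f (FA a) = FB (f a)" using W unfolding AutW_def by (elim conjE) assumption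
  interpret ea: eig A r FA \<alpha> by (rule a.eig_of[OF fA iA a0 nru])
  interpret eb: eig B r FB \<alpha> by (rule b.eig_of[OF fB iB a0 nru])
  have "f ` ea.S p n \<subseteq> eb.S p n" for p n
  proof
    fix x assume "x \<in> f ` ea.S p n"
    then obtain v where v: "v \<in> ea.S p n" "x = f v" by blast
    have vW: "v \<in> W A p n" and Fv: "FA v = smult A (\<alpha> powi (n * r + p)) v"
      using v(1) ea.S_mem ea.lam_def by auto
    have "f v \<in> W B p n" using f_W vW by blast
    moreover have "FB (f v) = smult B (\<alpha> powi (n * r + p)) (f v)"
    proof -
      have "FB (f v) = f (FA v)" using comm by simp
      also have "\<dots> = smult B (\<alpha> powi (n * r + p)) (f v)" unfolding Fv f_scale ..
      finally show ?thesis .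
    qed
    ultimately show "x \<in> eb.S p n" using v(2) eb.S_mem eb.lam_def by simp
  qed
  then show ?thesis unfolding admits_r_splitting_def
    by (intro exI[of _ ea.S] exI[of _ eb.S] conjI ea.r_split eb.r_split allI)
qed

lemma two_to_three:
  assumes H: "\<forall>GA GB. AutE A B r f GA GB \<longrightarrow>
                 (\<exists>FA FB. AutW A B f FA FB \<and> Er_induces A r FA GA \<and> Er_induces B r FB GB)"
    and a0: "(\<beta>::'k) \<noteq> 0" and nru: "\<forall>m::nat. 0 < m \<longrightarrow> \<beta> ^ m \<noteq> 1"
  shows "\<exists>\<alpha>::'k. \<alpha> \<noteq> 0 \<and> (\<forall>m::nat. 0 < m \<longrightarrow> \<alpha> ^ m \<noteq> 1) \<and>
                 (\<exists>FA FB. AutW A B f FA FB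
                    \<and> Er_induces A r FA (bigrading_aut A r \<alpha>)
                    \<and> Er_induces B r FB (bigrading_aut B r \<alpha>))"
proof -
  have "AutE A B r f (bigrading_aut A r \<beta>) (bigrading_aut B r \<beta>)" by (rule bigr_AutE[OF a0])
  then have "\<exists>FA FB. AutW A B f FA FB \<and> Er_induces A r FA (bigrading_aut A r \<beta>) \<and> Er_induces B r FB (bigrading_aut B r \<beta>)"
    using H by blast
  then show ?thesis using a0 nru by blast
qed

lemma one_to_two:
  assumes adm: "admits_r_splitting A B r f" and E: "AutE A B r f GA GB"
  shows "\<exists>FA FB. AutW A B f FA FB \<and> Er_induces A r FA GA \<and> Er_induces B r FB GB"
proof -
  obtain SA SB where rsA: "r_splitting A r SA" and rsB: "r_splitting B r SB"
    and fS: "\<forall>p n. f ` SA p n \<subseteq> SB p n"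
    using adm unfolding admits_r_splitting_def by blast
  have GAa: "Er_aut A r GA" using E unfolding AutE_def by (elim conjE) assumption
  have GBa: "Er_aut B r GB" using E unfolding AutE_def by (elim conjE) assumption
  have comm: "\<forall>p n. \<forall>X\<in>Ep A r p n. Er_map A B r f p n (GA p n X) = GB p n (Er_map A B r f p n X)"
    using E unfolding AutE_def by (elim conjE) assumption
  interpret la: liftG A r SA GA
    by (rule liftG.intro[OF spl.intro[OF a.pf_axioms spl_axioms.intro[OF rsA]] liftG_axioms.intro[OF GAa]])
  interpret lb: liftG B r SB GB
    by (rule liftG.intro[OF spl.intro[OF b.pf_axioms spl_axioms.intro[OF rsB]] liftG_axioms.intro[OF GBa]])
  have sig_f: "f (la.sig p n s) = lb.sig p n (f s)" if s: "s \<in> SA p n" for p n s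
  proof (rule lb.sig_char[symmetric])
    show "f s \<in> SB p n" using fS s by blast
    show "f (la.sig p n s) \<in> SB p n" using fS la.sig(1)[OF s] by blast
    have "cls B r p n (f (la.sig p n s)) = Er_map A B r f p n (cls A r p n (la.sig p n s))"
      by (rule f_cls[symmetric])
    also have "\<dots> = Er_map A B r f p n (GA p n (cls A r p n s))" using la.sig(2)[OF s] by simp
    also have "\<dots> = GB p n (Er_map A B r f p n (cls A r p n s))" using comm la.cls_S_Ep[OF s] by blast
    also have "\<dots> = GB p n (cls B r p n (f s))" by (simp add: f_cls)
    finally show "cls B r p n (f (la.sig p n s)) = GB p n (cls B r p n (f s))" .
  qed
  have compat: "f (la.FF v) = lb.FF (f v)" for v
  proof -
    obtain g P where P: "finite P" "\<forall>i\<in>P. g i \<in> SA (fst i) (snd i)" "v = sum g P" by (rule la.decompE)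
    have fP: "\<forall>i\<in>P. f (g i) \<in> SB (fst i) (snd i)" using P(2) fS by blast
    have "f (la.FF v) = (\<Sum>i\<in>P. f (la.sig (fst i) (snd i) (g i)))"
      unfolding P(3) la.FF_sum[OF P(1) P(2)] fadd.sum ..
    also have "\<dots> = (\<Sum>i\<in>P. lb.sig (fst i) (snd i) (f (g i)))"
      using P(2) by (intro sum.cong) (auto simp: sig_f)
    also have "\<dots> = lb.FF (f v)" unfolding P(3) fadd.sum lb.FF_sum[OF P(1) fP] ..
    finally show ?thesis .
  qed
  have "AutW A B f la.FF lb.FF" unfolding AutW_def using la.FF_filaut lb.FF_filaut compat by blast
  then show ?thesis using la.FF_ind lb.FF_ind by blast
qed

end

lemma cof_pf: assumes "Er_cofibrant_fg A r" shows "pf A r"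
proof -
  have fdA: "is_fdga A" using assms unfolding Er_cofibrant_fg_def by (elim conjE) assumption
  interpret fd A by (rule fd.intro[OF fdA])
  show ?thesis by (rule pf.intro[OF fd_axioms]) (unfold_locales, rule cof_pure[OF assms])
qed

theorem lemma2p19:
  fixes A :: "('k::field_char_0, 'v::ab_group_add) fdga"
    and B :: "('k, 'w::ab_group_add) fdga"
    and f :: "'v \<Rightarrow> 'w"
    and r :: nat
  assumes "Er_cofibrant_fg A (int r)"
    and "Er_cofibrant_fg B (int r)"
    and "fdga_hom A B f"
  shows "(admits_r_splitting A B (int r) f
          \<longleftrightarrow> (\<forall>GA GB. AutE A B (int r) f GA GB \<longrightarrow>
                 (\<exists>FA FB. AutW A B f FA FB \<and> Er_induces A (int r) FA GA \<and> Er_induces B (int r) FB GB)))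
       \<and> ((\<forall>GA GB. AutE A B (int r) f GA GB \<longrightarrow>
                 (\<exists>FA FB. AutW A B f FA FB \<and> Er_induces A (int r) FA GA \<and> Er_induces B (int r) FB GB))
          \<longleftrightarrow> (\<exists>\<alpha>::'k. \<alpha> \<noteq> 0 \<and> (\<forall>m::nat. 0 < m \<longrightarrow> \<alpha> ^ m \<noteq> 1) \<and>
                 (\<exists>FA FB. AutW A B f FA FB
                    \<and> Er_induces A (int r) FA (bigrading_aut A (int r) \<alpha>)
                    \<and> Er_induces B (int r) FB (bigrading_aut B (int r) \<alpha>))))"
proof -
  interpret pf2 A B "int r" f
    by (rule pf2.intro[OF cof_pf[OF assms(1)] cof_pf[OF assms(2)]]) (unfold_locales, rule assms(3))
  let ?P1 = "admits_r_splitting A B (int r) f"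
  let ?P2 = "\<forall>GA GB. AutE A B (int r) f GA GB \<longrightarrow>
                 (\<exists>FA FB. AutW A B f FA FB \<and> Er_induces A (int r) FA GA \<and> Er_induces B (int r) FB GB)"
  let ?P3 = "\<exists>\<alpha>::'k. \<alpha> \<noteq> 0 \<and> (\<forall>m::nat. 0 < m \<longrightarrow> \<alpha> ^ m \<noteq> 1) \<and>
                 (\<exists>FA FB. AutW A B f FA FB
                    \<and> Er_induces A (int r) FA (bigrading_aut A (int r) \<alpha>)
                    \<and> Er_induces B (int r) FB (bigrading_aut B (int r) \<alpha>))"
  have 12: "?P1 \<Longrightarrow> ?P2" using one_to_two by blast
  have a0: "(2::'k) \<noteq> 0" by simp
  have nru: "\<forall>m::nat. 0 < m \<longrightarrow> (2::'k) ^ m \<noteq> 1"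
  proof (intro allI impI)
    fix m :: nat assume m: "0 < m"
    have e: "(2::'k) ^ m = of_nat (2 ^ m)" by simp
    have "(2::nat) ^ m \<noteq> 1" using m by simp
    then show "(2::'k) ^ m \<noteq> 1" unfolding e using of_nat_eq_1_iff by blast
  qed
  have 23: "?P2 \<Longrightarrow> ?P3" by (rule two_to_three[OF _ a0 nru])
  have 31: "?P3 \<Longrightarrow> ?P1"
  proof -
    assume ?P3
    then obtain \<alpha> FA FB where "\<alpha> \<noteq> 0" "\<forall>m::nat. 0 < m \<longrightarrow> \<alpha> ^ m \<noteq> 1" "AutW A B f FA FB"
      "Er_induces A (int r) FA (bigrading_aut A (int r) \<alpha>)" "Er_induces B (int r) FB (bigrading_aut B (int r) \<alpha>)"
      by blast
    then show ?P1 by (rule three_to_one)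
  qed
  show ?thesis using 12 23 31 by blast
qed



end
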